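(* Let $F$ be a cusp form of even weight $k$ for $\mathbf G(\mathbb Z)$ and $\chi$ a primitive Dirichlet character mod $N$. Then for every $Y\in R_3^+(\mathbb R)$, $$F_\chi\big(\sqrt{-1}\,(N^2Y)^{-1}\big)=(-1)^{3k/2}\,W(\chi)^2N^{3k-1}(\det Y)^k\,F_{\bar\chi}(\sqrt{-1}\,Y),$$ where $(N^2Y)^{-1}$ is the Jordan-algebra inverse.
   Context: $\mathfrak J_\mathbb Q$ is the exceptional Jordan algebra of $3\times3$ Hermitian matrices over the Cayley numbers $\mathfrak C_\mathbb Q$ (entries $a,b,c\in\mathbb Q$ on the diagonal, $x,y,z\in\mathfrak C_\mathbb Q$ off-diagonal), with its cubic determinant $\det$ and trace $\mathrm{Tr}$; $\mathfrak J(\mathbb Z)$ is the lattice with integral diagonal and off-diagonal entries in the integral Cayley numbers $\mathfrak o$. $(X,Y)=\mathrm{Tr}(X\circ Y)$ with $X\circ Y=\frac12(XY+YX)$. $R_3^+(\mathbb R)=\{X^2:X\in\mathfrak J(\mathbb R),\det X\ne0\}$, $\mathfrak J(\mathbb Z)_{>0}=\mathfrak J(\mathbb Z)\cap R_3^+(\mathbb R)$. $F$ is a holomorphic cusp form of weight $k$ on the exceptional tube domain $\{X+\sqrt{-1}Y:X,Y\in\mathfrak J(\mathbb R),Y\in R_3^+(\mathbb R)\}$ for $\mathbf G(\mathbb Z)$, $\mathbf G$ the $\mathbb Q$-group of type $GE_{7,3}$, with Fourier expansion $F(Z)=\sum_{T\in\mathfrak J(\mathbb Z)_{>0}}a_F(T)\mathbf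 e((T,Z))$, $\mathbf e(x)=e^{2\pi\sqrt{-1}x}$. For a Dirichlet character $\chi$ mod $N$ (extended by $0$ on non-units), $F_\chi(Z)=\sum_{T}\chi(\mathrm{Tr}(T))a_F(T)\mathbf e((T,Z))$, and $W(\chi)=\sum_{a\bmod N}\chi(a)\mathbf e(a/N)$. *)

theory Defs
  imports "HOL-Analysis.Analysis"
begin

section \<open>Cayley numbers (octonions) over a commutative ring\<close>

text \<open>Basis e0 = 1, e1, ..., e7; multiplication by the Cayley-Dickson doubling of the
  quaternions: (a,b)(c,d) = (ac - conj(d) b, d a + b conj(c)), e0..e3 = quaternion
  part a, e4..e7 = part b.\<close>

datatype 'a oct = Oct 'a 'a 'a 'a 'a 'a 'a 'a

fun ocomp :: "'a oct \<Rightarrow> nat \<Rightarrow> 'a" where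
  "ocomp (Oct x0 x1 x2 x3 x4 x5 x6 x7) i =
     [x0, x1, x2, x3, x4, x5, x6, x7] ! i"

fun oct_map :: "('a \<Rightarrow> 'b) \<Rightarrow> 'a oct \<Rightarrow> 'b oct" where
  "oct_map f (Oct x0 x1 x2 x3 x4 x5 x6 x7) =
     Oct (f x0) (f x1) (f x2) (f x3) (f x4) (f x5) (f x6) (f x7)"

fun oct_add :: "'a::plus oct \<Rightarrow> 'a oct \<Rightarrow> 'a oct" where
  "oct_add (Oct x0 x1 x2 x3 x4 x5 x6 x7) (Oct y0 y1 y2 y3 y4 y5 y6 y7) =
     Oct (x0 + y0) (x1 + y1) (x2 + y2) (x3 + y3) (x4 + y4) (x5 + y5) (x6 + y6) (x7 + y7)"

definition oct_smul :: "'a::times \<Rightarrow> 'a oct \<Rightarrow> 'a oct" where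
  "oct_smul c x = oct_map (\<lambda>t. c * t) x"

definition oct_scalar :: "'a::zero \<Rightarrow> 'a oct" where
  "oct_scalar c = Oct c 0 0 0 0 0 0 0"

fun oct_cnj :: "'a::uminus oct \<Rightarrow> 'a oct" where
  "oct_cnj (Oct x0 x1 x2 x3 x4 x5 x6 x7) =
     Oct x0 (- x1) (- x2) (- x3) (- x4) (- x5) (- x6) (- x7)"

fun oct_mul :: "'a::comm_ring_1 oct \<Rightarrow> 'a oct \<Rightarrow> 'a oct" where
  "oct_mul (Oct x0 x1 x2 x3 x4 x5 x6 x7) (Oct y0 y1 y2 y3 y4 y5 y6 y7) =
     Oct (x0 * y0 - x1 * y1 - x2 * y2 - x3 * y3 - x4 * y4 - x5 * y5 - x6 * y6 - x7 * y7)
     (x0 * y1 + x1 * y0 + x2 * y3 - x3 * y2 + x4 * y5 - x5 * y4 - x6 * y7 + x7 * y6)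
     (x0 * y2 - x1 * y3 + x2 * y0 + x3 * y1 + x4 * y6 + x5 * y7 - x6 * y4 - x7 * y5)
     (x0 * y3 + x1 * y2 - x2 * y1 + x3 * y0 + x4 * y7 - x5 * y6 + x6 * y5 - x7 * y4)
     (x0 * y4 - x1 * y5 - x2 * y6 - x3 * y7 + x4 * y0 + x5 * y1 + x6 * y2 + x7 * y3)
     (x0 * y5 + x1 * y4 - x2 * y7 + x3 * y6 - x4 * y1 + x5 * y0 - x6 * y3 + x7 * y2)
     (x0 * y6 + x1 * y7 + x2 * y4 - x3 * y5 - x4 * y2 + x5 * y3 + x6 * y0 - x7 * y1)
     (x0 * y7 - x1 * y6 + x2 * y5 + x3 * y4 - x4 * y3 - x5 * y2 + x6 * y1 + x7 * y0)"

definition oct_re :: "'a oct \<Rightarrow> 'a" where "oct_re x = ocomp x 0"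
definition oct_tr :: "'a::comm_ring_1 oct \<Rightarrow> 'a" where "oct_tr x = 2 * oct_re x"
definition oct_norm :: "'a::comm_ring_1 oct \<Rightarrow> 'a" where
  "oct_norm x = oct_re (oct_mul x (oct_cnj x))"

text \<open>The integral Cayley numbers: Z^8 together with the half-integral vectors whose set of
  half-odd coordinates is a word of the following extended Hamming code.  This lattice is
  closed under multiplication, contains 1 and is unimodular for the trace form, hence it is
  a maximal order (Coxeter's integral octonions for this multiplication table); all maximal
  orders are conjugate under automorphisms of the Cayley algebra.\<close>

definition oint_code :: "nat set set" where
  "oint_code = {{}, {0,1,2,3,4,5,6,7},
     {0,1,2,3}, {0,1,4,6}, {0,1,5,7}, {0,2,4,5}, {0,2,6,7}, {0,3,4,7}, {0,3,5,6},
     {1,2,4,7}, {1,2,5,6}, {1,3,4,5}, {1,3,6,7}, {2,3,4,6}, {2,3,5,7}, {4,5,6,7}}"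

definition half_odd :: "real \<Rightarrow> bool" where
  "half_odd t \<longleftrightarrow> (\<exists>n::int. 2 * t = 2 * of_int n + 1)"

definition oint :: "real oct set" where
  "oint = {x. (\<forall>i<8. 2 * ocomp x i \<in> \<int>) \<and> {i. i < 8 \<and> half_odd (ocomp x i)} \<in> oint_code}"

section \<open>The exceptional Jordan algebra\<close>

text \<open>Jor a b c x y z is the Hermitian matrix
  [[a, z, conj y], [conj z, b, x], [y, conj x, c]].\<close>

datatype 'a jor = Jor 'a 'a 'a "'a oct" "'a oct" "'a oct"

fun jor_map :: "('a \<Rightarrow> 'b) \<Rightarrow> 'a jor \<Rightarrow> 'b jor" where
  "jor_map f (Jor a b c x y z) = Jor (f a) (f b) (f c) (oct_map f x) (oct_map f y) (oct_map f z)"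

fun jor_add :: "'a::plus jor \<Rightarrow> 'a jor \<Rightarrow> 'a jor" where
  "jor_add (Jor a b c x y z) (Jor a' b' c' x' y' z') =
     Jor (a + a') (b + b') (c + c') (oct_add x x') (oct_add y y') (oct_add z z')"

definition jor_smul :: "'a::times \<Rightarrow> 'a jor \<Rightarrow> 'a jor" where
  "jor_smul t X = jor_map (\<lambda>s. t * s) X"

definition jone :: "'a::{zero,one} jor" where
  "jone = Jor 1 1 1 (oct_scalar 0) (oct_scalar 0) (oct_scalar 0)"

fun jent :: "'a::{zero,uminus} jor \<Rightarrow> nat \<Rightarrow> nat \<Rightarrow> 'a oct" where
  "jent (Jor a b c x y z) i j =
     (if i = 0 \<and> j = 0 then oct_scalar a else if i = 0 \<and> j = 1 then z
      else if i = 0 \<and> j = 2 then oct_cnj y else if i = 1 \<and> j = 0 then oct_cnj z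
      else if i = 1 \<and> j = 1 then oct_scalar b else if i = 1 \<and> j = 2 then x
      else if i = 2 \<and> j = 0 then y else if i = 2 \<and> j = 1 then oct_cnj x
      else oct_scalar c)"

definition jmatmul :: "'a::comm_ring_1 jor \<Rightarrow> 'a jor \<Rightarrow> nat \<Rightarrow> nat \<Rightarrow> 'a oct" where
  "jmatmul X Y i j = oct_add (oct_add (oct_mul (jent X i 0) (jent Y 0 j))
       (oct_mul (jent X i 1) (jent Y 1 j))) (oct_mul (jent X i 2) (jent Y 2 j))"

definition jprod :: "'a::field jor \<Rightarrow> 'a jor \<Rightarrow> 'a jor" where
  "jprod X Y = (let M = (\<lambda>i j. oct_smul (1/2) (oct_add (jmatmul X Y i j) (jmatmul Y X i j)))
     in Jor (oct_re (M 0 0)) (oct_re (M 1 1)) (oct_re (M 2 2)) (M 1 2) (M 2 0) (M 0 1))"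

fun jtr :: "'a::plus jor \<Rightarrow> 'a" where
  "jtr (Jor a b c x y z) = a + b + c"

definition jinner :: "'a::field jor \<Rightarrow> 'a jor \<Rightarrow> 'a" where
  "jinner X Y = jtr (jprod X Y)"

fun jdet :: "'a::comm_ring_1 jor \<Rightarrow> 'a" where
  "jdet (Jor a b c x y z) = a * b * c - a * oct_norm x - b * oct_norm y - c * oct_norm z
     + oct_tr (oct_mul (oct_mul x y) z)"

definition jsharp :: "'a::field jor \<Rightarrow> 'a jor" where
  "jsharp X = jor_add (jor_add (jprod X X) (jor_smul (- jtr X) X))
      (jor_smul ((jtr X ^ 2 - jtr (jprod X X)) / 2) jone)"

definition jinv :: "'a::field jor \<Rightarrow> 'a jor" where
  "jinv X = jor_smul (1 / jdet X) (jsharp X)"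

definition JZ :: "real jor set" where
  "JZ = {X. case X of Jor a b c x y z \<Rightarrow> a \<in> \<int> \<and> b \<in> \<int> \<and> c \<in> \<int> \<and> x \<in> oint \<and> y \<in> oint \<and> z \<in> oint}"

definition R3plus :: "real jor set" where
  "R3plus = {jprod X X | X. jdet X \<noteq> 0}"

definition JZpos :: "real jor set" where
  "JZpos = JZ \<inter> R3plus"

definition jC :: "real jor \<Rightarrow> complex jor" where
  "jC X = jor_map complex_of_real X"

definition tube :: "complex jor set" where
  "tube = {jor_add (jC X) (jor_smul \<i> (jC Y)) | X Y. Y \<in> R3plus}"

definition jor_of_vec :: "'a ^ 27 \<Rightarrow> 'a jor" where
  "jor_of_vec v = Jor (v$1) (v$2) (v$3)
     (Oct (v$4) (v$5) (v$6) (v$7) (v$8) (v$9) (v$10) (v$11))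
     (Oct (v$12) (v$13) (v$14) (v$15) (v$16) (v$17) (v$18) (v$19))
     (Oct (v$20) (v$21) (v$22) (v$23) (v$24) (v$25) (v$26) (v$27))"

definition holomorphic_jor :: "(complex jor \<Rightarrow> complex) \<Rightarrow> complex jor set \<Rightarrow> bool" where
  "holomorphic_jor F U \<longleftrightarrow> (\<forall>v. jor_of_vec v \<in> U \<longrightarrow>
     (\<exists>L. ((F \<circ> jor_of_vec) has_derivative L) (at v) \<and> (\<forall>c w. L (c *s w) = c * L w)))"

section \<open>The group G of type E7 via the Freudenthal triple system\<close>

type_synonym 'a fts = "'a \<times> 'a \<times> 'a jor \<times> 'a jor"

fun fts_q :: "'a::field fts \<Rightarrow> 'a" where
  "fts_q (al, be, A, B) = (al * be - jinner A B) ^ 2 + 4 * al * jdet B + 4 * be * jdet A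
     - 4 * jinner (jsharp A) (jsharp B)"

fun fts_symp :: "'a::field fts \<Rightarrow> 'a fts \<Rightarrow> 'a" where
  "fts_symp (al, be, A, B) (al', be', A', B') = al * be' - be * al' - jinner A B' + jinner B A'"

fun fts_add :: "'a::plus fts \<Rightarrow> 'a fts \<Rightarrow> 'a fts" where
  "fts_add (al, be, A, B) (al', be', A', B') = (al + al', be + be', jor_add A A', jor_add B B')"

fun fts_smul :: "'a::times \<Rightarrow> 'a fts \<Rightarrow> 'a fts" where
  "fts_smul t (al, be, A, B) = (t * al, t * be, jor_smul t A, jor_smul t B)"

fun fts_map :: "('a \<Rightarrow> 'b) \<Rightarrow> 'a fts \<Rightarrow> 'b fts" where
  "fts_map f (al, be, A, B) = (f al, f be, jor_map f A, jor_map f B)"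

definition GR :: "(real fts \<Rightarrow> real fts) set" where
  "GR = {g. (\<forall>x y. g (fts_add x y) = fts_add (g x) (g y)) \<and> (\<forall>c x. g (fts_smul c x) = fts_smul c (g x))
      \<and> bij g \<and> (\<forall>x. fts_q (g x) = fts_q x) \<and> (\<forall>x y. fts_symp (g x) (g y) = fts_symp x y)}"

definition fts_lattice :: "real fts set" where
  "fts_lattice = {(al, be, A, B). al \<in> \<int> \<and> be \<in> \<int> \<and> A \<in> JZ \<and> B \<in> JZ}"

definition GZ :: "(real fts \<Rightarrow> real fts) set" where
  "GZ = {g \<in> GR. g ` fts_lattice = fts_lattice}"

definition cext :: "(real fts \<Rightarrow> real fts) \<Rightarrow> complex fts \<Rightarrow> complex fts" where
  "cext g x = fts_add (fts_map complex_of_real (g (fts_map Re x)))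
                      (fts_smul \<i> (fts_map complex_of_real (g (fts_map Im x))))"

text \<open>Z |-> (1, det Z, Z, Z#); g acts by g (emb Z) = j(g,Z) (emb (g<Z>)).\<close>
definition femb :: "complex jor \<Rightarrow> complex fts" where
  "femb Z = (1, jdet Z, Z, jsharp Z)"

definition ee :: "complex \<Rightarrow> complex" where
  "ee z = exp (2 * of_real pi * \<i> * z)"

definition is_cusp_form :: "nat \<Rightarrow> (complex jor \<Rightarrow> complex) \<Rightarrow> (real jor \<Rightarrow> complex) \<Rightarrow> bool" where
  "is_cusp_form k F a \<longleftrightarrow>
     holomorphic_jor F tube \<and>
     (\<forall>g\<in>GZ. \<forall>Z\<in>tube. \<forall>W\<in>tube. \<forall>j. cext g (femb Z) = fts_smul j (femb W) \<longrightarrow> F W = j ^ k * F Z) \<and>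
     (\<forall>Z\<in>tube. (\<lambda>T. a T * ee (jinner (jC T) Z)) summable_on JZpos \<and>
                F Z = (\<Sum>\<^sub>\<infinity>T\<in>JZpos. a T * ee (jinner (jC T) Z)))"

section \<open>Dirichlet characters and twists\<close>

definition dchar :: "nat \<Rightarrow> (int \<Rightarrow> complex) \<Rightarrow> bool" where
  "dchar N chi \<longleftrightarrow> N > 0 \<and> chi 1 = 1 \<and> (\<forall>a b. chi (a * b) = chi a * chi b) \<and>
     (\<forall>a. chi (a + int N) = chi a) \<and> (\<forall>a. chi a = 0 \<longleftrightarrow> \<not> coprime a (int N))"

definition primitive_dchar :: "nat \<Rightarrow> (int \<Rightarrow> complex) \<Rightarrow> bool" where
  "primitive_dchar N chi \<longleftrightarrow> dchar N chi \<and>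
     (\<forall>d. 0 < d \<and> d dvd N \<and> d < N \<longrightarrow>
        \<not> (\<forall>a. coprime a (int N) \<and> a mod int d = 1 mod int d \<longrightarrow> chi a = 1))"

definition gauss_sum :: "nat \<Rightarrow> (int \<Rightarrow> complex) \<Rightarrow> complex" where
  "gauss_sum N chi = (\<Sum>a<N. chi (int a) * ee (of_nat a / of_nat N))"

definition twist :: "(int \<Rightarrow> complex) \<Rightarrow> (real jor \<Rightarrow> complex) \<Rightarrow> complex jor \<Rightarrow> complex" where
  "twist chi a Z = (\<Sum>\<^sub>\<infinity>T\<in>JZpos. chi \<lfloor>jtr T\<rfloor> * a T * ee (jinner (jC T) Z))"

end

theory Submission
  imports Defs "HOL-Number_Theory.Cong"
begin


fun odot :: "'a::comm_ring_1 oct \<Rightarrow> 'a oct \<Rightarrow> 'a" where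
  "odot (Oct x0 x1 x2 x3 x4 x5 x6 x7) (Oct y0 y1 y2 y3 y4 y5 y6 y7) =
     x0*y0 + x1*y1 + x2*y2 + x3*y3 + x4*y4 + x5*y5 + x6*y6 + x7*y7"

lemma jor_exh:
  obtains a b c x0 x1 x2 x3 x4 x5 x6 x7 y0 y1 y2 y3 y4 y5 y6 y7 z0 z1 z2 z3 z4 z5 z6 z7
  where "X = Jor a b c (Oct x0 x1 x2 x3 x4 x5 x6 x7) (Oct y0 y1 y2 y3 y4 y5 y6 y7) (Oct z0 z1 z2 z3 z4 z5 z6 z7)"
proof -
  obtain a b c x y z where X: "X = Jor a b c x y z" by (cases X)
  obtain x0 x1 x2 x3 x4 x5 x6 x7 where x: "x = Oct x0 x1 x2 x3 x4 x5 x6 x7" by (cases x)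
  obtain y0 y1 y2 y3 y4 y5 y6 y7 where y: "y = Oct y0 y1 y2 y3 y4 y5 y6 y7" by (cases y)
  obtain z0 z1 z2 z3 z4 z5 z6 z7 where z: "z = Oct z0 z1 z2 z3 z4 z5 z6 z7" by (cases z)
  show ?thesis by (rule that) (simp add: X x y z)
qed

lemma jsharp_explicit: fixes a b c :: "'a::field_char_0"
  shows "jsharp (Jor a b c x y z) = Jor (b*c - oct_norm x) (c*a - oct_norm y) (a*b - oct_norm z)
    (oct_add (oct_cnj (oct_mul y z)) (oct_smul (-a) x))
    (oct_add (oct_cnj (oct_mul z x)) (oct_smul (-b) y))
    (oct_add (oct_cnj (oct_mul x y)) (oct_smul (-c) z))"
  apply (cases x; cases y; cases z)
  apply (simp add: jsharp_def jprod_def jmatmul_def jone_def jor_smul_def oct_smul_def oct_scalar_def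
     oct_re_def oct_tr_def oct_norm_def Let_def power2_eq_square)
  apply (intro conjI; simp add: algebra_simps field_simps)
  done

lemma jinner_explicit: fixes a b c :: "'a::field_char_0"
  shows "jinner (Jor a b c x y z) (Jor a' b' c' x' y' z') = a*a' + b*b' + c*c' + 2 * (odot x x' + odot y y' + odot z z')"
  apply (cases x; cases y; cases z; cases x'; cases y'; cases z')
  apply (simp add: jinner_def jprod_def jmatmul_def oct_smul_def oct_scalar_def
     oct_re_def Let_def)
  apply (simp add: algebra_simps field_simps)
  done

lemma jprod_explicit: fixes a b c :: "'a::field_char_0"
  shows "jprod (Jor a b c x y z) (Jor a b c x y z) = Jor (a*a + oct_norm z + oct_norm y) (b*b + oct_norm z + oct_norm x) (c*c + oct_norm y + oct_norm x)
    (oct_add (oct_smul (b + c) x) (oct_cnj (oct_mul y z)))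
    (oct_add (oct_smul (c + a) y) (oct_cnj (oct_mul z x)))
    (oct_add (oct_smul (a + b) z) (oct_cnj (oct_mul x y)))"
  apply (cases x; cases y; cases z)
  apply (simp add: jprod_def jmatmul_def oct_smul_def oct_scalar_def
     oct_re_def oct_norm_def Let_def)
  apply (intro conjI; simp add: algebra_simps field_simps)
  done

definition jcross :: "'a::field_char_0 jor \<Rightarrow> 'a jor \<Rightarrow> 'a jor" where
  "jcross X Y = jor_smul (1/2) (jor_add (jsharp (jor_add X Y)) (jor_add (jor_smul (-1) (jsharp X)) (jor_smul (-1) (jsharp Y))))"

definition jtil :: "'a::field_char_0 jor \<Rightarrow> 'a jor" where
  "jtil X = jor_add (jor_smul (jtr X) jone) (jor_smul (-1) X)"

lemmas UNF = jsharp_explicit jinner_explicit jprod_explicit jcross_def jtil_def jdet.simps jtr.simps jor_smul_def jor_map.simps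
  jor_add.simps jone_def oct_mul.simps oct_add.simps oct_smul_def oct_map.simps oct_re_def oct_tr_def
  oct_norm_def oct_cnj.simps ocomp.simps nth_Cons_0 oct.inject jor.inject oct_scalar_def odot.simps


section \<open>Brute-force Jordan identities\<close>

context fixes dummy :: "'a::field_char_0"
begin
end

lemma jinner_sym: fixes X :: "'a::field_char_0 jor" shows "jinner X Y = jinner Y X"
  by (cases X rule: jor_exh; cases Y rule: jor_exh; hypsubst_thin; simp only: UNF; (intro conjI)?; (rule TrueI | algebra | simp add: algebra_simps power2_eq_square power3_eq_cube))
lemma jsharp_sharp: fixes X :: "'a::field_char_0 jor" shows "jsharp (jsharp X) = jor_smul (jdet X) X"
  by (cases X rule: jor_exh; hypsubst_thin; simp only: UNF; (intro conjI)?; (rule TrueI | algebra | simp add: algebra_simps power2_eq_square power3_eq_cube))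
lemma jdet_sharp: fixes X :: "'a::field_char_0 jor" shows "jdet (jsharp X) = (jdet X)^2"
  by (cases X rule: jor_exh; hypsubst_thin; simp only: UNF; (intro conjI)?; (rule TrueI | algebra | simp add: algebra_simps power2_eq_square power3_eq_cube))
lemma jsharp_prod: fixes X :: "'a::field_char_0 jor" shows "jsharp (jprod X X) = jprod (jsharp X) (jsharp X)"
  by (cases X rule: jor_exh; hypsubst_thin; simp only: UNF; (intro conjI)?; (rule TrueI | algebra | simp add: algebra_simps power2_eq_square power3_eq_cube))
lemma jdet_prod: fixes X :: "'a::field_char_0 jor" shows "jdet (jprod X X) = (jdet X)^2"
  by (cases X rule: jor_exh; hypsubst_thin; simp only: UNF; (intro conjI)?; (rule TrueI | algebra | simp add: algebra_simps power2_eq_square power3_eq_cube))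
lemma jdet_smul: fixes X :: "'a::field_char_0 jor" shows "jdet (jor_smul c X) = c^3 * jdet X"
  by (cases X rule: jor_exh; hypsubst_thin; simp only: UNF; (intro conjI)?; (rule TrueI | algebra | simp add: algebra_simps power2_eq_square power3_eq_cube))
lemma jsharp_smul: fixes X :: "'a::field_char_0 jor" shows "jsharp (jor_smul c X) = jor_smul (c^2) (jsharp X)"
  by (cases X rule: jor_exh; hypsubst_thin; simp only: UNF; (intro conjI)?; (rule TrueI | algebra | simp add: algebra_simps power2_eq_square power3_eq_cube))
lemma jprod_smul: fixes X :: "'a::field_char_0 jor" shows "jprod (jor_smul c X) (jor_smul c X) = jor_smul (c^2) (jprod X X)"
  by (cases X rule: jor_exh; hypsubst_thin; simp only: UNF; (intro conjI)?; (rule TrueI | algebra | simp add: algebra_simps power2_eq_square power3_eq_cube))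
lemma jor_smul_smul: fixes X :: "'a::field_char_0 jor" shows "jor_smul c (jor_smul d X) = jor_smul (c*d) X"
  by (cases X rule: jor_exh; hypsubst_thin; simp only: UNF; (intro conjI)?; (rule TrueI | algebra | simp add: algebra_simps power2_eq_square power3_eq_cube))
lemma jor_smul_one: fixes X :: "'a::field_char_0 jor" shows "jor_smul 1 X = X"
  by (cases X rule: jor_exh; hypsubst_thin; simp only: UNF; (intro conjI)?; (rule TrueI | algebra | simp add: algebra_simps power2_eq_square power3_eq_cube))
lemma jdet_nonzero_prod: fixes S :: "'a::field_char_0 jor" shows "jdet S \<noteq> 0 \<Longrightarrow> jdet (jprod S S) \<noteq> 0"
  by (simp add: jdet_prod)

lemma jinv_smul: fixes X :: "'a::field_char_0 jor" assumes "c \<noteq> 0"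
  shows "jinv (jor_smul c X) = jor_smul (1/c) (jinv X)"
  using assms by (simp add: jinv_def jdet_smul jsharp_smul jor_smul_smul power2_eq_square power3_eq_cube field_simps)

section \<open>Maps on the Freudenthal triple system\<close>

definition Tt :: "'a::field_char_0 \<Rightarrow> 'a fts \<Rightarrow> 'a fts" where
 "Tt t x = (case x of (al, be, A, C) \<Rightarrow> (al, be + t * jtr C + t^2 * jtr A + t^3 * al,
    jor_add A (jor_smul (t*al) jone), jor_add (jor_add C (jor_smul t (jtil A))) (jor_smul (t^2*al) jone)))"

definition iot :: "'a::field_char_0 fts \<Rightarrow> 'a fts" where
 "iot x = (case x of (al, be, A, C) \<Rightarrow> (- be, al, C, jor_smul (-1) A))"

definition dlt :: "'a::field_char_0 \<Rightarrow> 'a \<Rightarrow> 'a fts \<Rightarrow> 'a fts" where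
 "dlt r ri x = (case x of (al, be, A, C) \<Rightarrow> (ri^3 * al, r^3 * be, jor_smul ri A, jor_smul r C))"

lemma fts_exh:
  obtains al be a b c x0 x1 x2 x3 x4 x5 x6 x7 y0 y1 y2 y3 y4 y5 y6 y7 z0 z1 z2 z3 z4 z5 z6 z7
     a' b' c' x0' x1' x2' x3' x4' x5' x6' x7' y0' y1' y2' y3' y4' y5' y6' y7' z0' z1' z2' z3' z4' z5' z6' z7'
  where "(x :: 'a fts) = (al, be, Jor a b c (Oct x0 x1 x2 x3 x4 x5 x6 x7) (Oct y0 y1 y2 y3 y4 y5 y6 y7) (Oct z0 z1 z2 z3 z4 z5 z6 z7),
     Jor a' b' c' (Oct x0' x1' x2' x3' x4' x5' x6' x7') (Oct y0' y1' y2' y3' y4' y5' y6' y7') (Oct z0' z1' z2' z3' z4' z5' z6' z7'))"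
proof -
  obtain al be A C where x: "x = (al, be, A, C)" by (cases x)
  show ?thesis by (cases A rule: jor_exh; cases C rule: jor_exh) (rule that, simp add: x)
qed

definition fembg :: "'a::field_char_0 jor \<Rightarrow> 'a fts" where
  "fembg Z = (1, jdet Z, Z, jsharp Z)"

lemma femb_eq: "femb Z = fembg Z" by (simp add: femb_def fembg_def)

lemmas FUNF = UNF Tt_def iot_def dlt_def prod.case fts_q.simps fts_symp.simps fts_add.simps fts_smul.simps fembg_def prod.inject

lemma Tt_q: fixes x :: "'a::field_char_0 fts" shows "fts_q (Tt t x) = fts_q x"
  by (cases x rule: fts_exh; hypsubst_thin; simp only: FUNF; (intro conjI)?; (rule TrueI | algebra | simp add: algebra_simps power2_eq_square power3_eq_cube))
lemma Tt_symp: fixes x :: "'a::field_char_0 fts" shows "fts_symp (Tt t x) (Tt t y) = fts_symp x y"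
  by (cases x rule: fts_exh; cases y rule: fts_exh; hypsubst_thin; simp only: FUNF; (intro conjI)?; (rule TrueI | algebra | simp add: algebra_simps power2_eq_square power3_eq_cube))
lemma Tt_add: fixes x :: "'a::field_char_0 fts" shows "Tt t (fts_add x y) = fts_add (Tt t x) (Tt t y)"
  by (cases x rule: fts_exh; cases y rule: fts_exh; hypsubst_thin; simp only: FUNF; (intro conjI)?; (rule TrueI | algebra | simp add: algebra_simps power2_eq_square power3_eq_cube))
lemma Tt_smul: fixes x :: "'a::field_char_0 fts" shows "Tt t (fts_smul c x) = fts_smul c (Tt t x)"
  by (cases x rule: fts_exh; hypsubst_thin; simp only: FUNF; (intro conjI)?; (rule TrueI | algebra | simp add: algebra_simps power2_eq_square power3_eq_cube))
lemma Tt_inv: fixes x :: "'a::field_char_0 fts" shows "Tt (-t) (Tt t x) = x"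
  by (cases x rule: fts_exh; hypsubst_thin; simp only: FUNF; (intro conjI)?; (rule TrueI | algebra | simp add: algebra_simps power2_eq_square power3_eq_cube))

lemma iot_q: fixes x :: "'a::field_char_0 fts" shows "fts_q (iot x) = fts_q x"
  by (cases x rule: fts_exh; hypsubst_thin; simp only: FUNF; (intro conjI)?; (rule TrueI | algebra | simp add: algebra_simps power2_eq_square power3_eq_cube))
lemma iot_symp: fixes x :: "'a::field_char_0 fts" shows "fts_symp (iot x) (iot y) = fts_symp x y"
  by (cases x rule: fts_exh; cases y rule: fts_exh; hypsubst_thin; simp only: FUNF; (intro conjI)?; (rule TrueI | algebra | simp add: algebra_simps power2_eq_square power3_eq_cube))
lemma iot_add: fixes x :: "'a::field_char_0 fts" shows "iot (fts_add x y) = fts_add (iot x) (iot y)"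
  by (cases x rule: fts_exh; cases y rule: fts_exh; hypsubst_thin; simp only: FUNF; (intro conjI)?; (rule TrueI | algebra | simp add: algebra_simps power2_eq_square power3_eq_cube))
lemma iot_smul: fixes x :: "'a::field_char_0 fts" shows "iot (fts_smul c x) = fts_smul c (iot x)"
  by (cases x rule: fts_exh; hypsubst_thin; simp only: FUNF; (intro conjI)?; (rule TrueI | algebra | simp add: algebra_simps power2_eq_square power3_eq_cube))
lemma iot_inv: fixes x :: "'a::field_char_0 fts" shows "iot (iot (fts_smul (-1) x)) = x"
  by (cases x rule: fts_exh; hypsubst_thin; simp only: FUNF; (intro conjI)?; (rule TrueI | algebra | simp add: algebra_simps power2_eq_square power3_eq_cube))
lemma iot_inv2: fixes x :: "'a::field_char_0 fts" shows "fts_smul (-1) (iot (iot x)) = x"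
  by (cases x rule: fts_exh; hypsubst_thin; simp only: FUNF; (intro conjI)?; (rule TrueI | algebra | simp add: algebra_simps power2_eq_square power3_eq_cube))

lemma dlt_q: fixes x :: "'a::field_char_0 fts" assumes "r * ri = 1" shows "fts_q (dlt r ri x) = fts_q x"
  using assms by (cases x rule: fts_exh; hypsubst_thin; simp only: FUNF; (intro conjI)?; (rule TrueI | algebra | simp add: algebra_simps power2_eq_square power3_eq_cube))
lemma dlt_symp: fixes x :: "'a::field_char_0 fts" assumes "r * ri = 1" shows "fts_symp (dlt r ri x) (dlt r ri y) = fts_symp x y"
  using assms by (cases x rule: fts_exh; cases y rule: fts_exh; hypsubst_thin; simp only: FUNF; (intro conjI)?; (rule TrueI | algebra | simp add: algebra_simps power2_eq_square power3_eq_cube))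
lemma dlt_add: fixes x :: "'a::field_char_0 fts" shows "dlt r ri (fts_add x y) = fts_add (dlt r ri x) (dlt r ri y)"
  by (cases x rule: fts_exh; cases y rule: fts_exh; hypsubst_thin; simp only: FUNF; (intro conjI)?; (rule TrueI | algebra | simp add: algebra_simps power2_eq_square power3_eq_cube))
lemma dlt_smul: fixes x :: "'a::field_char_0 fts" shows "dlt r ri (fts_smul c x) = fts_smul c (dlt r ri x)"
  by (cases x rule: fts_exh; hypsubst_thin; simp only: FUNF; (intro conjI)?; (rule TrueI | algebra | simp add: algebra_simps power2_eq_square power3_eq_cube))
lemma dlt_inv: fixes x :: "'a::field_char_0 fts" assumes "r * ri = 1" shows "dlt ri r (dlt r ri x) = x"
  using assms by (cases x rule: fts_exh; hypsubst_thin; simp only: FUNF; (intro conjI)?; (rule TrueI | algebra | simp add: algebra_simps power2_eq_square power3_eq_cube))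

lemma Tt_femb: fixes Z :: "'a::field_char_0 jor" shows "Tt t (fembg Z) = fembg (jor_add Z (jor_smul t jone))"
  by (cases Z rule: jor_exh; hypsubst_thin; simp only: FUNF; (intro conjI)?; (rule TrueI | algebra | simp add: algebra_simps power2_eq_square power3_eq_cube))
lemma dlt_femb: fixes Z :: "'a::field_char_0 jor" assumes "r * ri = 1"
  shows "dlt r ri (fembg Z) = fts_smul (ri^3) (fembg (jor_smul (r^2) Z))"
  using assms by (cases Z rule: jor_exh; hypsubst_thin; simp only: FUNF; (intro conjI)?; (rule TrueI | algebra | simp add: algebra_simps power2_eq_square power3_eq_cube))

lemma iot_femb: fixes Z :: "'a::field_char_0 jor" assumes "jdet Z \<noteq> 0"
  shows "iot (fembg Z) = fts_smul (- jdet Z) (fembg (jor_smul (-1) (jinv Z)))"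
proof -
  have "jor_smul (-1) (jinv Z) = jor_smul (- (1 / jdet Z)) (jsharp Z)"
    by (simp add: jinv_def jor_smul_smul)
  then show ?thesis using assms
    by (simp add: fembg_def iot_def jdet_smul jsharp_smul jsharp_sharp jdet_sharp jor_smul_smul
        power2_eq_square power3_eq_cube field_simps jor_smul_one)
qed


definition gmapG :: "'a::field_char_0 \<Rightarrow> 'a \<Rightarrow> 'a \<Rightarrow> 'a \<Rightarrow> 'a \<Rightarrow> 'a fts \<Rightarrow> 'a fts" where
  "gmapG p q r s ri = Tt (p*ri) \<circ> iot \<circ> dlt r ri \<circ> Tt (s*ri)"

definition Gexp :: "'a::field_char_0 \<Rightarrow> 'a \<Rightarrow> 'a \<Rightarrow> 'a \<Rightarrow> 'a fts \<Rightarrow> 'a fts" where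
  "Gexp p q r s x = (case x of (al,be,A,C) \<Rightarrow>
    (-(s^3*al + s^2*r*jtr A + s*r^2*jtr C + r^3*be),
     -(p^3*be + p^2*q*jtr C + p*q^2*jtr A + q^3*al),
     jor_add (jor_add (jor_smul r C) (jor_smul (-s) A)) (jor_smul (-(p*r^2*be + p*r* s*jtr C + q*r* s*jtr A + q* s^2*al)) jone),
     jor_add (jor_add (jor_smul q A) (jor_smul (-p) C)) (jor_smul (-(p^2*r*be + p*q*r*jtr C + p*q* s*jtr A + q^2* s*al)) jone)))"

lemma gmap_Gexp: fixes x :: "'a::field_char_0 fts" assumes "r * ri = 1" "p* s - q*r = 1"
  shows "gmapG p q r s ri x = Gexp p q r s x"
  using assms unfolding gmapG_def o_def Gexp_def
  by (cases x rule: fts_exh; hypsubst_thin; simp only: FUNF; (intro conjI)?; (rule TrueI | algebra | simp add: algebra_simps power2_eq_square power3_eq_cube))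

lemma Gexp_inv: fixes x :: "'a::field_char_0 fts" assumes "p* s - q*r = 1"
  shows "Gexp p q r s (Gexp s (-q) (-r) p x) = x"
  using assms unfolding Gexp_def
  by (cases x rule: fts_exh; hypsubst_thin; simp only: FUNF; (intro conjI)?; (rule TrueI | algebra | simp add: algebra_simps power2_eq_square power3_eq_cube))

lemma lt8: "(i::nat) < 8 \<longleftrightarrow> i = 0 \<or> i = 1 \<or> i = 2 \<or> i = 3 \<or> i = 4 \<or> i = 5 \<or> i = 6 \<or> i = 7"
  by auto
lemma set8: "{i::nat. i < 8 \<and> P i} = set (filter P [0,1,2,3,4,5,6,7])"
  unfolding set_filter lt8 by auto
lemma code_symdiff: "S \<in> oint_code \<Longrightarrow> T \<in> oint_code \<Longrightarrow> {i. i < 8 \<and> (i \<in> S) \<noteq> (i \<in> T)} \<in> oint_code"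
  unfolding set8 oint_code_def
  by (elim insertE emptyE; hypsubst_thin; simp)

lemma ocomp_add: "i < 8 \<Longrightarrow> ocomp (oct_add x y) i = ocomp x i + ocomp y i"
  by (cases x; cases y; auto simp: lt8)
lemma ocomp_smul: "i < 8 \<Longrightarrow> ocomp (oct_smul c x) i = c * ocomp x i"
  by (cases x; auto simp: lt8 oct_smul_def)

lemma half_odd_of_int: "2 * u = of_int m \<Longrightarrow> half_odd u \<longleftrightarrow> odd m"
proof -
  assume h: "2 * u = of_int m"
  have e: "\<And>n::int. (of_int m = (2 * of_int n + 1 :: real)) \<longleftrightarrow> m = 2 * n + 1"
  proof -
    fix n :: int
    have "(2 * of_int n + 1 :: real) = of_int (2 * n + 1)" by simp
    then show "(of_int m = (2 * of_int n + 1 :: real)) \<longleftrightarrow> m = 2 * n + 1" by (simp only: of_int_eq_iff)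
  qed
  have "half_odd u \<longleftrightarrow> (\<exists>n::int. m = 2 * n + 1)" unfolding half_odd_def h e ..
  also have "\<dots> \<longleftrightarrow> odd m" by (auto elim: oddE)
  finally show ?thesis .
qed

lemma oint_add: assumes "x \<in> oint" "y \<in> oint" shows "oct_add x y \<in> oint"
proof -
  have ix: "\<forall>i<8. 2 * ocomp x i \<in> \<int>" and cx: "{i. i < 8 \<and> half_odd (ocomp x i)} \<in> oint_code"
    using assms(1) by (auto simp: oint_def)
  have iy: "\<forall>i<8. 2 * ocomp y i \<in> \<int>" and cy: "{i. i < 8 \<and> half_odd (ocomp y i)} \<in> oint_code"
    using assms(2) by (auto simp: oint_def)
  have 1: "\<forall>i<8. 2 * ocomp (oct_add x y) i \<in> \<int>"
    using ix iy by (simp add: ocomp_add distrib_left)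
  have "{i. i < 8 \<and> half_odd (ocomp (oct_add x y) i)} =
     {i. i < 8 \<and> (i \<in> {i. i < 8 \<and> half_odd (ocomp x i)}) \<noteq> (i \<in> {i. i < 8 \<and> half_odd (ocomp y i)})}"
  proof (intro Collect_cong conj_cong refl)
    fix i :: nat assume i: "i < 8"
    obtain m where m: "2 * ocomp x i = of_int m" using ix i Ints_cases by metis
    obtain n where n: "2 * ocomp y i = of_int n" using iy i Ints_cases by metis
    have "2 * ocomp (oct_add x y) i = of_int (m + n)" using m n i by (simp add: ocomp_add distrib_left)
    then have "half_odd (ocomp (oct_add x y) i) \<longleftrightarrow> odd (m + n)" by (rule half_odd_of_int)
    also have "\<dots> \<longleftrightarrow> odd m \<noteq> odd n" by auto
    finally show "half_odd (ocomp (oct_add x y) i) = ((i \<in> {i. i < 8 \<and> half_odd (ocomp x i)}) \<noteq> (i \<in> {i. i < 8 \<and> half_odd (ocomp y i)}))"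
      using i half_odd_of_int[OF m] half_odd_of_int[OF n] by auto
  qed
  then have 2: "{i. i < 8 \<and> half_odd (ocomp (oct_add x y) i)} \<in> oint_code"
    using code_symdiff[OF cx cy] by simp
  show ?thesis using 1 2 by (simp add: oint_def)
qed

lemma oint_smul: assumes "x \<in> oint" "k \<in> \<int>" shows "oct_smul k x \<in> oint"
proof -
  obtain n where k: "k = of_int n" using assms(2) Ints_cases by metis
  have ix: "\<forall>i<8. 2 * ocomp x i \<in> \<int>" and cx: "{i. i < 8 \<and> half_odd (ocomp x i)} \<in> oint_code"
    using assms(1) by (auto simp: oint_def)
  have 1: "\<forall>i<8. 2 * ocomp (oct_smul k x) i \<in> \<int>"
    using ix assms(2) by (simp add: ocomp_smul mult.left_commute)
  have eq: "{i. i < 8 \<and> half_odd (ocomp (oct_smul k x) i)} = (if even n then {} else {i. i < 8 \<and> half_odd (ocomp x i)})"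
  proof (intro set_eqI iffI)
    fix i assume "i \<in> {i. i < 8 \<and> half_odd (ocomp (oct_smul k x) i)}"
    then have i: "i < 8" and h: "half_odd (ocomp (oct_smul k x) i)" by auto
    obtain m where m: "2 * ocomp x i = of_int m" using ix i Ints_cases by metis
    have "2 * ocomp (oct_smul k x) i = of_int (n * m)" using m i k by (simp add: ocomp_smul mult.left_commute)
    then have "odd (n * m)" using h half_odd_of_int by blast
    then show "i \<in> (if even n then {} else {i. i < 8 \<and> half_odd (ocomp x i)})"
      using i half_odd_of_int[OF m] by auto
  next
    fix i assume "i \<in> (if even n then {} else {i. i < 8 \<and> half_odd (ocomp x i)})"
    then have i: "i < 8" and on: "odd n" and h: "half_odd (ocomp x i)" by (auto split: if_splits)
    obtain m where m: "2 * ocomp x i = of_int m" using ix i Ints_cases by metis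
    have "2 * ocomp (oct_smul k x) i = of_int (n * m)" using m i k by (simp add: ocomp_smul mult.left_commute)
    moreover have "odd (n * m)" using on h half_odd_of_int[OF m] by auto
    ultimately show "i \<in> {i. i < 8 \<and> half_odd (ocomp (oct_smul k x) i)}" using i half_odd_of_int by blast
  qed
  have 2: "{i. i < 8 \<and> half_odd (ocomp (oct_smul k x) i)} \<in> oint_code"
    unfolding eq using cx by (auto simp: oint_code_def)
  show ?thesis using 1 2 by (simp add: oint_def)
qed

lemma oint_zero: "oct_scalar 0 \<in> oint"
proof -
  have h0: "\<not> half_odd (0::real)" using half_odd_of_int[of 0 0] by simp
  have z: "i < 8 \<Longrightarrow> ocomp (oct_scalar (0::real)) i = 0" for i
    by (auto simp: oct_scalar_def lt8)
  have "{i. i < 8 \<and> half_odd (ocomp (oct_scalar (0::real)) i)} = {}"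
    using z h0 by auto
  moreover have "\<forall>i<8. 2 * ocomp (oct_scalar (0::real)) i \<in> \<int>" using z by simp
  ultimately show ?thesis by (simp add: oint_def oint_code_def)
qed


section \<open>Lattice closure and membership in G(Z)\<close>

lemma JZ_iff: "Jor a b c x y z \<in> JZ \<longleftrightarrow> a \<in> \<int> \<and> b \<in> \<int> \<and> c \<in> \<int> \<and> x \<in> oint \<and> y \<in> oint \<and> z \<in> oint"
  by (simp add: JZ_def)

lemma JZ_add: "X \<in> JZ \<Longrightarrow> Y \<in> JZ \<Longrightarrow> jor_add X Y \<in> JZ"
  by (cases X; cases Y) (simp add: JZ_iff oint_add Ints_add)

lemma JZ_smul: "k \<in> \<int> \<Longrightarrow> X \<in> JZ \<Longrightarrow> jor_smul k X \<in> JZ"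
proof (cases X)
  case (Jor a b c x y z)
  assume k: "k \<in> \<int>" and X: "X \<in> JZ"
  have e: "\<And>w. oct_map (\<lambda>s. k * s) w = oct_smul k w" by (simp add: oct_smul_def)
  show ?thesis using k X Jor by (simp add: JZ_iff jor_smul_def e oint_smul Ints_mult)
qed

lemma jone_JZ: "(jone :: real jor) \<in> JZ"
  by (simp add: jone_def JZ_iff oint_zero)

lemma jtr_JZ: "X \<in> JZ \<Longrightarrow> jtr X \<in> \<int>"
  by (cases X) (simp add: JZ_iff Ints_add)

lemma Gexp_lattice:
  assumes "p \<in> \<int>" "q \<in> \<int>" "r \<in> \<int>" "s \<in> \<int>" "x \<in> fts_lattice"
  shows "Gexp p q r s x \<in> fts_lattice"
proof -
  obtain al be A C where x: "x = (al, be, A, C)" by (cases x)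
  have h: "al \<in> \<int>" "be \<in> \<int>" "A \<in> JZ" "C \<in> JZ" using assms(5) x by (auto simp: fts_lattice_def)
  have t: "jtr A \<in> \<int>" "jtr C \<in> \<int>" using h jtr_JZ by auto
  note I = Ints_add Ints_mult Ints_minus Ints_power Ints_diff
  show ?thesis unfolding x Gexp_def fts_lattice_def using assms(1-4) h t
    by (auto intro!: JZ_add JZ_smul jone_JZ I)
qed

lemma gmap_GZ:
  fixes p q r s :: int assumes r: "r \<noteq> 0" and det: "p * s - q * r = 1"
  shows "gmapG (of_int p) (of_int q) (of_int r) (of_int s) (1 / of_int r) \<in> GZ"
proof -
  define P :: real where "P = of_int p"
  define Q :: real where "Q = of_int q"
  define R :: real where "R = of_int r"
  define S :: real where "S = of_int s"
  have rr: "R * (1/R) = 1" using r by (simp add: R_def)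
  have dd: "P * S - Q * R = 1" unfolding P_def Q_def R_def S_def
    by (metis det of_int_1 of_int_diff of_int_mult)
  have dd': "S * P - (- Q) * (- R) = 1" using dd by (simp add: algebra_simps)
  let ?g = "gmapG P Q R S (1/R)"
  let ?h = "Gexp S (- Q) (- R) P"
  have geq: "\<And>x. ?g x = Gexp P Q R S x" by (rule gmap_Gexp[OF rr dd])
  have inv1: "\<And>x. ?g (?h x) = x" using geq Gexp_inv[OF dd] by simp
  have inv2: "\<And>x. ?h (?g x) = x" using geq Gexp_inv[OF dd', of x for x] by simp
  have ints: "P \<in> \<int>" "Q \<in> \<int>" "R \<in> \<int>" "S \<in> \<int>" "- Q \<in> \<int>" "- R \<in> \<int>"
    by (auto simp: P_def Q_def R_def S_def)
  have GR: "?g \<in> GR"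
    unfolding GR_def
  proof (intro CollectI conjI allI)
    fix x y show "?g (fts_add x y) = fts_add (?g x) (?g y)"
      by (simp add: gmapG_def Tt_add iot_add dlt_add)
  next
    fix c x show "?g (fts_smul c x) = fts_smul c (?g x)"
      by (simp add: gmapG_def Tt_smul iot_smul dlt_smul)
  next
    show "bij ?g" unfolding bij_def inj_def surj_def
      by (metis inv1 inv2)
  next
    fix x show "fts_q (?g x) = fts_q x"
      by (simp add: gmapG_def Tt_q iot_q dlt_q[OF rr])
  next
    fix x y show "fts_symp (?g x) (?g y) = fts_symp x y"
      by (simp add: gmapG_def Tt_symp iot_symp dlt_symp[OF rr])
  qed
  have lat: "?g ` fts_lattice = fts_lattice"
  proof
    show "?g ` fts_lattice \<subseteq> fts_lattice" using geq Gexp_lattice ints by auto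
  next
    show "fts_lattice \<subseteq> ?g ` fts_lattice"
    proof
      fix x assume x: "x \<in> fts_lattice"
      have "?h x \<in> fts_lattice" using Gexp_lattice ints x by auto
      then show "x \<in> ?g ` fts_lattice" using inv1[of x] by (metis image_eqI)
    qed
  qed
  show ?thesis using GR lat unfolding GZ_def P_def Q_def R_def S_def by simp
qed


section \<open>Complexification\<close>

lemmas OFR = of_real_add of_real_mult of_real_diff of_real_minus of_real_power of_real_1 of_real_0 of_real_numeral of_real_divide

lemma fts_cdecomp: fixes w :: "complex fts"
  shows "w = fts_add (fts_map complex_of_real (fts_map Re w)) (fts_smul \<i> (fts_map complex_of_real (fts_map Im w)))"
  by (cases w rule: fts_exh; hypsubst_thin; simp only: fts_map.simps jor_map.simps oct_map.simps fts_add.simps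
      fts_smul.simps jor_add.simps jor_smul_def oct_add.simps prod.inject jor.inject oct.inject;
      (intro conjI)?; rule complex_eq)

lemma Tt_ofreal: "Tt (complex_of_real t) (fts_map complex_of_real v) = fts_map complex_of_real (Tt t v)"
  by (cases v rule: fts_exh; hypsubst_thin; simp only: FUNF fts_map.simps jor_map.simps oct_map.simps OFR;
      (intro conjI)?; (rule TrueI | rule refl | algebra | simp add: algebra_simps power2_eq_square power3_eq_cube))
lemma iot_ofreal: "iot (fts_map complex_of_real v) = fts_map complex_of_real (iot v)"
  by (cases v rule: fts_exh; hypsubst_thin; simp only: FUNF fts_map.simps jor_map.simps oct_map.simps OFR;
      (intro conjI)?; (rule TrueI | rule refl | algebra | simp add: algebra_simps power2_eq_square power3_eq_cube))
lemma dlt_ofreal: "dlt (complex_of_real r) (complex_of_real ri) (fts_map complex_of_real v) = fts_map complex_of_real (dlt r ri v)"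
  by (cases v rule: fts_exh; hypsubst_thin; simp only: FUNF fts_map.simps jor_map.simps oct_map.simps OFR;
      (intro conjI)?; (rule TrueI | rule refl | algebra | simp add: algebra_simps power2_eq_square power3_eq_cube))

lemma cext_lin:
  fixes hR :: "real fts \<Rightarrow> real fts" and hC :: "complex fts \<Rightarrow> complex fts"
  assumes add: "\<And>u v. hC (fts_add u v) = fts_add (hC u) (hC v)"
    and sm: "\<And>c u. hC (fts_smul c u) = fts_smul c (hC u)"
    and re: "\<And>v. hC (fts_map complex_of_real v) = fts_map complex_of_real (hR v)"
  shows "cext hR w = hC w"
proof -
  have "hC w = hC (fts_add (fts_map complex_of_real (fts_map Re w)) (fts_smul \<i> (fts_map complex_of_real (fts_map Im w))))"
    using fts_cdecomp[of w] by simp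
  also have "\<dots> = cext hR w" by (simp add: add sm re cext_def)
  finally show ?thesis by simp
qed

lemma cext_gmap:
  "cext (gmapG p q r s ri) w = gmapG (complex_of_real p) (complex_of_real q) (complex_of_real r) (complex_of_real s) (complex_of_real ri) w"
  by (rule cext_lin) (simp_all add: gmapG_def Tt_add iot_add dlt_add Tt_smul iot_smul dlt_smul
      flip: Tt_ofreal iot_ofreal dlt_ofreal of_real_mult)

lemma jC_exp: "jC (Jor a b c (Oct x0 x1 x2 x3 x4 x5 x6 x7) (Oct y0 y1 y2 y3 y4 y5 y6 y7) (Oct z0 z1 z2 z3 z4 z5 z6 z7)) =
  Jor (of_real a) (of_real b) (of_real c) (Oct (of_real x0) (of_real x1) (of_real x2) (of_real x3) (of_real x4) (of_real x5) (of_real x6) (of_real x7))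
   (Oct (of_real y0) (of_real y1) (of_real y2) (of_real y3) (of_real y4) (of_real y5) (of_real y6) (of_real y7))
   (Oct (of_real z0) (of_real z1) (of_real z2) (of_real z3) (of_real z4) (of_real z5) (of_real z6) (of_real z7))"
  by (simp add: jC_def)

lemmas CUNF = UNF jC_exp OFR

lemma jdet_jC: "jdet (jC Y) = complex_of_real (jdet Y)"
  by (cases Y rule: jor_exh; hypsubst_thin; simp only: CUNF; (intro conjI)?; (rule TrueI | rule refl | algebra | simp add: algebra_simps))
lemma jtr_jC: "jtr (jC Y) = complex_of_real (jtr Y)"
  by (cases Y rule: jor_exh; hypsubst_thin; simp only: CUNF; (intro conjI)?; (rule TrueI | rule refl | algebra | simp add: algebra_simps))
lemma jsharp_jC: "jsharp (jC Y) = jC (jsharp Y)"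
  by (cases Y rule: jor_exh; hypsubst_thin; simp only: CUNF; (intro conjI)?; (rule TrueI | rule refl | algebra | simp add: algebra_simps))
lemma jinner_jC: "jinner (jC T) (jC Y) = complex_of_real (jinner T Y)"
  by (cases Y rule: jor_exh; cases T rule: jor_exh; hypsubst_thin; simp only: CUNF; (intro conjI)?; (rule TrueI | rule refl | algebra | simp add: algebra_simps))
lemma jC_smul: "jC (jor_smul t Y) = jor_smul (complex_of_real t) (jC Y)"
  by (cases Y rule: jor_exh; hypsubst_thin; simp only: CUNF; (intro conjI)?; (rule TrueI | rule refl | algebra | simp add: algebra_simps))
lemma jC_add: "jC (jor_add X Y) = jor_add (jC X) (jC Y)"
  by (cases Y rule: jor_exh; cases X rule: jor_exh; hypsubst_thin; simp only: CUNF; (intro conjI)?; (rule TrueI | rule refl | algebra | simp add: algebra_simps))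
lemma jC_one: "jC jone = jone"
  by (simp add: jC_def jone_def oct_scalar_def)
lemma jinv_jC: "jinv (jC Y) = jC (jinv Y)"
  by (simp add: jinv_def jdet_jC jsharp_jC jC_smul)

lemma R3plus_det: "Y \<in> R3plus \<Longrightarrow> jdet Y \<noteq> 0"
  by (auto simp: R3plus_def jdet_prod)

lemma R3plus_inv:
  assumes Y: "Y \<in> R3plus" and N: "M \<noteq> 0"
  shows "jinv (jor_smul (M^2) Y) \<in> R3plus"
proof -
  obtain S where S: "Y = jprod S S" "jdet S \<noteq> 0" using Y by (auto simp: R3plus_def)
  define d where "d = jdet S"
  have d: "d \<noteq> 0" using S by (simp add: d_def)
  define R where "R = jor_smul (1 / (M * d)) (jsharp S)"
  have "jprod R R = jor_smul ((1 / (M * d))^2) (jsharp Y)"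
    by (simp add: R_def jprod_smul S jsharp_prod)
  also have "\<dots> = jinv (jor_smul (M^2) Y)"
  proof -
    have sc: "(1 / (M * d))^2 = 1 / ((M^2)^3 * d^2) * (M^2)^2"
      using N d by (simp add: field_simps power2_eq_square power3_eq_cube)
    show ?thesis
      by (simp only: jinv_def jdet_smul jsharp_smul jor_smul_smul S jdet_prod d_def[symmetric] sc)
  qed
  finally have 1: "jprod R R = jinv (jor_smul (M^2) Y)" .
  have 2: "jdet R \<noteq> 0" using N d by (simp add: R_def jdet_smul jdet_sharp d_def)
  show ?thesis unfolding R3plus_def using 1 2 by (metis (mono_tags, lifting) mem_Collect_eq)
qed

lemma tube_I: "Y \<in> R3plus \<Longrightarrow> jor_add (jC X) (jor_smul \<i> (jC Y)) \<in> tube"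
  by (auto simp: tube_def)


lemma fts_smul_smul: fixes x :: "'a::field_char_0 fts" shows "fts_smul a (fts_smul b x) = fts_smul (a*b) x"
  by (cases x rule: fts_exh; hypsubst_thin; simp only: FUNF; (intro conjI)?; (rule TrueI | rule refl | algebra | simp add: algebra_simps))
lemma jor_shift_back: fixes V :: "'a::field_char_0 jor"
  shows "jor_add (jor_add (jor_smul u jone) V) (jor_smul (-u) jone) = V"
  by (cases V rule: jor_exh; hypsubst_thin; simp only: UNF; (intro conjI)?; (rule TrueI | rule refl | algebra | simp add: algebra_simps))
lemma jor_add_comm: fixes V :: "'a::field_char_0 jor" shows "jor_add V W = jor_add W V"
  by (cases V rule: jor_exh; cases W rule: jor_exh; hypsubst_thin; simp only: UNF; (intro conjI)?; (rule TrueI | rule refl | algebra | simp add: algebra_simps))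

lemma chain:
  fixes Y :: "real jor" and b c q :: int and N :: nat
  assumes N: "N > 0" and dY: "jdet Y \<noteq> 0"
  shows "gmapG (of_int b :: complex) (of_int q) (of_nat N) (of_int (- c)) (1 / of_nat N)
     (femb (jor_add (jC (jor_smul (of_int c / real N) jone)) (jor_smul \<i> (jC Y)))) =
   fts_smul (\<i> * of_nat N ^ 3 * complex_of_real (jdet Y))
     (femb (jor_add (jC (jor_smul (of_int b / real N) jone)) (jor_smul \<i> (jC (jinv (jor_smul (real N ^ 2) Y))))))"
proof -
  define n :: complex where "n = of_nat N"
  have n0: "n \<noteq> 0" using N by (simp add: n_def)
  have nn: "n * (1/n) = 1" using n0 by simp
  define V where "V = jor_smul \<i> (jC Y)"
  define V' where "V' = jor_smul (n^2 * \<i>) (jC Y)"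
  have dV': "jdet V' = - \<i> * n^6 * complex_of_real (jdet Y)"
  proof -
    have i3: "\<i>^3 = - \<i>" by (simp add: eval_nat_numeral)
    have "(n^2 * \<i>)^3 = - \<i> * n^6" by (simp add: power_mult_distrib i3 flip: power_mult)
    then show ?thesis by (simp add: V'_def jdet_smul jdet_jC)
  qed
  have dV'0: "jdet V' \<noteq> 0" using dV' n0 dY by simp
  have s1: "Tt (of_int (- c) * (1 / n)) (fembg (jor_add (jC (jor_smul (of_int c / real N) jone)) V)) = fembg V"
  proof -
    have e: "of_int (- c) * (1 / n) = - complex_of_real (of_int c / real N)" by (simp add: n_def)
    show ?thesis by (simp only: Tt_femb jC_smul jC_one e jor_shift_back)
  qed
  have s2: "dlt n (1/n) (fembg V) = fts_smul ((1/n)^3) (fembg V')"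
    by (simp add: dlt_femb[OF nn] V_def V'_def jor_smul_smul)
  have s3: "iot (fts_smul ((1/n)^3) (fembg V')) = fts_smul ((1/n)^3 * - jdet V') (fembg (jor_smul (-1) (jinv V')))"
    by (simp add: iot_smul iot_femb[OF dV'0] fts_smul_smul)
  have s4: "Tt (of_int b * (1/n)) (fts_smul ((1/n)^3 * - jdet V') (fembg (jor_smul (-1) (jinv V')))) =
     fts_smul ((1/n)^3 * - jdet V') (fembg (jor_add (jor_smul (-1) (jinv V')) (jor_smul (of_int b * (1/n)) jone)))"
    by (simp add: Tt_smul Tt_femb)
  have sc: "(1/n)^3 * - jdet V' = \<i> * of_nat N ^ 3 * complex_of_real (jdet Y)"
    using n0 unfolding dV' by (simp add: n_def field_simps eval_nat_numeral)
  have pt: "jor_add (jor_smul (-1) (jinv V')) (jor_smul (of_int b * (1/n)) jone) =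
      jor_add (jC (jor_smul (of_int b / real N) jone)) (jor_smul \<i> (jC (jinv (jor_smul (real N ^ 2) Y))))"
  proof -
    have a: "jinv V' = jor_smul (1 / (n^2 * \<i>)) (jC (jinv Y))"
      using n0 by (simp add: V'_def jinv_smul jinv_jC)
    have b1: "jinv (jor_smul (real N ^ 2) Y) = jor_smul (1 / real N ^ 2) (jinv Y)"
      using N by (simp add: jinv_smul)
    have c1: "- (1 / (n^2 * \<i>)) = \<i> * complex_of_real (1 / real N ^ 2)"
      using n0 by (simp add: n_def field_simps)
    have c2: "of_int b * (1/n) = complex_of_real (of_int b / real N)" by (simp add: n_def)
    have c3: "- (1 / ((of_nat N)^2 * \<i>)) = (\<i> / (of_nat N)^2 :: complex)"
      using N by (simp add: field_simps)
    show ?thesis unfolding a b1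
      by (simp add: jor_smul_smul jC_smul jC_one c1 c2 jor_add_comm n_def c3)
  qed
  show ?thesis
    unfolding femb_eq gmapG_def o_def n_def[symmetric]
    using s1 s2 s3 s4 sc pt by (simp add: V_def, simp add: n_def)
qed


lemma ee_add: "ee (x + y) = ee x * ee y"
  by (simp add: ee_def distrib_left exp_add)

lemma ee_int: "ee (of_int n) = 1"
  unfolding ee_def exp_eq_1 by (intro conjI exI[of _ n]) simp_all

lemma ee_zero: "ee 0 = 1" by (simp add: ee_def)

definition eN :: "nat \<Rightarrow> int \<Rightarrow> complex" where
  "eN N m = ee (of_int m / of_nat N)"

lemma eN_add: "eN N (m + m') = eN N m * eN N m'"
  by (simp add: eN_def add_divide_distrib ee_add)

lemma eN_period: assumes "N > 0" shows "eN N (m + int N * k) = eN N m"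
proof -
  have "of_int (m + int N * k) / of_nat N = (of_int m / of_nat N + of_int k :: complex)"
    using assms by (simp add: field_simps)
  then show ?thesis by (simp add: eN_def ee_add ee_int)
qed

lemma eN_mod: assumes "N > 0" shows "eN N (m mod int N) = eN N m"
proof -
  have "eN N (m mod int N + int N * (m div int N)) = eN N (m mod int N)" by (rule eN_period[OF assms])
  then show ?thesis by (simp only: mod_mult_div_eq)
qed

lemma eN_0: "eN N 0 = 1" by (simp add: eN_def ee_zero)

lemma eN_cong: assumes "N > 0" "m mod int N = m' mod int N" shows "eN N m = eN N m'"
  using eN_mod[OF assms(1), of m] eN_mod[OF assms(1), of m'] assms(2) by simp

lemma eN_pow: "eN N (m * int t) = eN N m ^ t"
proof (induction t)
  case 0 then show ?case by (simp add: eN_def ee_zero)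
next
  case (Suc t)
  have "m * int (Suc t) = m * int t + m" by (simp add: algebra_simps)
  then show ?case using Suc by (simp add: eN_add)
qed

lemma eN_eq_1: assumes "N > 0" "eN N m = 1" shows "int N dvd m"
proof -
  have "exp (2 * complex_of_real pi * \<i> * (of_int m / of_nat N)) = 1" using assms(2) by (simp add: eN_def ee_def)
  then obtain n :: int where n: "Im (2 * complex_of_real pi * \<i> * (of_int m / of_nat N)) = of_int (2 * n) * pi"
    by (auto simp: exp_eq_1)
  have eq: "2 * complex_of_real pi * \<i> * (of_int m / of_nat N) = \<i> * complex_of_real (2 * pi * (of_int m / real N))"
    by simp
  have "Im (2 * complex_of_real pi * \<i> * (of_int m / of_nat N)) = 2 * pi * (of_int m / of_nat N)"
    unfolding eq by simp
  with n have "2 * pi * (of_int m / real N) = 2 * of_int n * pi" by simp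
  then have "(2 * pi) * (of_int m / real N) = (2 * pi) * of_int n" by (simp add: algebra_simps)
  moreover have pi0: "2 * pi \<noteq> 0" using pi_gt_zero by simp
  ultimately have "of_int m / real N = of_int n" by (metis mult_left_cancel)
  then have "of_int m = (of_int (n * int N) :: real)" using assms(1) by (simp add: field_simps)
  then have "m = n * int N" by (simp only: of_int_eq_iff)
  then show ?thesis by simp
qed

lemma eN_orth: assumes "N > 0"
  shows "(\<Sum>t<N. eN N (m * int t)) = (if int N dvd m then of_nat N else 0)"
proof (cases "int N dvd m")
  case True
  then obtain k where m: "m = int N * k" by (auto elim: dvdE)
  have "\<And>t. eN N (m * int t) = 1"
  proof -
    fix t
    have "eN N (m * int t) = eN N (0 + int N * (k * int t))" by (simp add: m algebra_simps)
    also have "\<dots> = eN N 0" by (rule eN_period[OF assms])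
    finally show "eN N (m * int t) = 1" by (simp only: eN_0)
  qed
  then show ?thesis using True by simp
next
  case False
  have z: "eN N m \<noteq> 1" using False eN_eq_1[OF assms] by blast
  have zN: "eN N m ^ N = 1"
  proof -
    have "eN N m ^ N = eN N (0 + int N * m)" by (simp add: eN_pow[symmetric] algebra_simps)
    also have "\<dots> = eN N 0" by (rule eN_period[OF assms])
    also have "\<dots> = 1" by (rule eN_0)
    finally show ?thesis .
  qed
  have "(\<Sum>t<N. eN N (m * int t)) = (\<Sum>t<N. eN N m ^ t)" by (simp add: eN_pow)
  also have "\<dots> = 0" using z zN by (simp add: sum_gp_strict)
  finally show ?thesis using False by simp
qed

section \<open>Dirichlet characters\<close>

context
  fixes N :: nat and chi :: "int \<Rightarrow> complex"
  assumes dc: "dchar N chi"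
begin

lemma dc_N: "N > 0" using dc by (simp add: dchar_def)
lemma dc_1: "chi 1 = 1" using dc by (simp add: dchar_def)
lemma dc_mult: "chi (a * b) = chi a * chi b" using dc by (simp add: dchar_def)
lemma dc_zero_iff: "chi a = 0 \<longleftrightarrow> \<not> coprime a (int N)" using dc by (simp add: dchar_def)
lemma dc_step: "chi (a + int N) = chi a" using dc by (simp add: dchar_def)

lemma dc_period_nat: "chi (a + int N * int n) = chi a"
proof (induction n arbitrary: a)
  case 0 then show ?case by simp
next
  case (Suc n)
  have e: "a + int N * int (Suc n) = (a + int N * int n) + int N" by (simp add: algebra_simps)
  have "chi ((a + int N * int n) + int N) = chi (a + int N * int n)" by (rule dc_step)
  then show ?case using Suc by (simp only: e)
qed

lemma dc_period: "chi (a + int N * k) = chi a"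
proof (cases "k \<ge> 0")
  case True
  then obtain n where "k = int n" using nonneg_int_cases by blast
  then show ?thesis using dc_period_nat by simp
next
  case False
  then obtain n where k: "k = - int n" by (metis linorder_not_le neg_int_cases less_imp_le)
  have "chi (a + int N * k + int N * int n) = chi (a + int N * k)" by (rule dc_period_nat)
  then show ?thesis by (simp add: k)
qed

lemma dc_mod: "chi (a mod int N) = chi a"
proof -
  have "chi (a mod int N + int N * (a div int N)) = chi (a mod int N)" by (rule dc_period)
  then show ?thesis by simp
qed

lemma dc_cong: "a mod int N = b mod int N \<Longrightarrow> chi a = chi b"
  using dc_mod[of a] dc_mod[of b] by simp

lemma dc_pow: "chi (a ^ n) = chi a ^ n"
  by (induction n) (simp_all add: dc_1 dc_mult)

lemma ord_exists:
  fixes a :: int assumes N: "N > 0" and cop: "coprime a (int N)"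
  shows "\<exists>n>0. (a ^ n) mod int N = 1 mod int N"
proof -
  let ?f = "\<lambda>i::nat. (a ^ i) mod int N"
  have sub: "?f ` {..N} \<subseteq> {0..<int N}" using N by auto
  have "\<not> inj_on ?f {..N}"
  proof
    assume "inj_on ?f {..N}"
    then have "card {..N} \<le> card {0..<int N}" using sub by (intro card_inj_on_le) auto
    then show False by simp
  qed
  then obtain i j where ij: "i \<in> {..N}" "j \<in> {..N}" "i \<noteq> j" "?f i = ?f j" unfolding inj_on_def by blast
  have main: "\<exists>n>0. (a ^ n) mod int N = 1 mod int N" if lt: "i' < j'" and eq: "?f i' = ?f j'" for i' j'
  proof -
    have "[a ^ i' * 1 = a ^ i' * a ^ (j' - i')] (mod int N)"
      using eq lt by (simp add: cong_def power_add[symmetric])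
    moreover have "coprime (a ^ i') (int N)" using cop by simp
    ultimately have "[1 = a ^ (j' - i')] (mod int N)" using cong_mult_lcancel by blast
    then show ?thesis using lt by (intro exI[of _ "j' - i'"]) (simp add: cong_def)
  qed
  show ?thesis
  proof (cases "i < j")
    case True then show ?thesis using main ij by blast
  next
    case False then have "j < i" using ij by simp
    then show ?thesis using main ij by metis
  qed
qed

lemma dc_norm: assumes "coprime a (int N)" shows "norm (chi a) = 1"
proof -
  obtain n where n: "n > 0" "(a ^ n) mod int N = 1 mod int N" using ord_exists[OF dc_N assms] by blast
  have "chi (a ^ n) = chi 1" using n(2) by (rule dc_cong)
  then have "chi a ^ n = 1" by (simp add: dc_pow dc_1)
  then show ?thesis using n(1) power_eq_1_iff[of "chi a" n] by simp
qed

lemma dc_cnj_mult: assumes "coprime a (int N)" shows "cnj (chi a) * chi a = 1"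
proof -
  have "chi a * cnj (chi a) = of_real ((norm (chi a))^2)" by (rule complex_norm_square[symmetric])
  then show ?thesis using dc_norm[OF assms] by (simp add: mult.commute)
qed

lemma dc_m1: "chi (-1) * chi (-1) = 1"
  using dc_mult[of "-1" "-1"] dc_1 by simp

lemma dc_cnj: "dchar N (\<lambda>n. cnj (chi n))"
  using dc unfolding dchar_def by (simp add: dc_mult)

end

lemma primitive_cnj: assumes "primitive_dchar N chi" shows "primitive_dchar N (\<lambda>n. cnj (chi n))"
proof -
  have dc: "dchar N chi" using assms by (simp add: primitive_dchar_def)
  have e: "\<And>a. cnj (chi a) = 1 \<longleftrightarrow> chi a = 1" by (metis complex_cnj_cnj complex_cnj_one)
  show ?thesis using assms dc_cnj[OF dc] unfolding primitive_dchar_def by (simp add: e)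
qed


lemma perm_mult:
  fixes u :: int assumes N: "N > 0" and cu: "coprime u (int N)"
  shows "bij_betw (\<lambda>b. nat ((int b * u) mod int N)) {..<N} {..<N}"
proof -
  let ?f = "\<lambda>b. nat ((int b * u) mod int N)"
  have maps: "?f ` {..<N} \<subseteq> {..<N}" using N by (auto simp: nat_less_iff)
  have inj: "inj_on ?f {..<N}"
  proof (rule inj_onI)
    fix b b' assume b: "b \<in> {..<N}" and b': "b' \<in> {..<N}" and e: "?f b = ?f b'"
    have "(int b * u) mod int N = (int b' * u) mod int N" using e N by (simp add: nat_eq_iff)
    then have "[int b * u = int b' * u] (mod int N)" by (simp add: cong_def)
    then have "[int b = int b'] (mod int N)" using cong_mult_rcancel[OF cu] by blast
    then have "int b = int b'" using b b' by (intro cong_less_imp_eq_int) auto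
    then show "b = b'" by simp
  qed
  have "?f ` {..<N} = {..<N}" using endo_inj_surj[OF _ maps inj] by simp
  then show ?thesis using inj by (simp add: bij_betw_def)
qed

lemma gauss_eN: "gauss_sum N psi = (\<Sum>m<N. psi (int m) * eN N (int m))"
  by (simp add: gauss_sum_def eN_def)

lemma gauss_key:
  assumes pr: "primitive_dchar N psi"
  shows "(\<Sum>b<N. psi (int b) * eN N (int b * t)) = cnj (psi t) * gauss_sum N psi"
proof -
  have dc: "dchar N psi" using pr by (simp add: primitive_dchar_def)
  have N: "N > 0" using dc_N[OF dc] .
  show ?thesis
  proof (cases "coprime t (int N)")
    case True
    let ?f = "\<lambda>b. nat ((int b * t) mod int N)"
    have bij: "bij_betw ?f {..<N} {..<N}" by (rule perm_mult[OF N True])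
    have f: "int (?f b) = (int b * t) mod int N" for b using N by simp
    have "gauss_sum N psi = (\<Sum>b<N. psi (int (?f b)) * eN N (int (?f b)))"
      unfolding gauss_eN by (rule sum.reindex_bij_betw[OF bij, symmetric])
    also have "\<dots> = (\<Sum>b<N. psi t * (psi (int b) * eN N (int b * t)))"
      by (intro sum.cong refl) (simp add: f dc_mod[OF dc] eN_mod[OF N] dc_mult[OF dc])
    also have "\<dots> = psi t * (\<Sum>b<N. psi (int b) * eN N (int b * t))" by (simp add: sum_distrib_left)
    finally have "cnj (psi t) * gauss_sum N psi = (cnj (psi t) * psi t) * (\<Sum>b<N. psi (int b) * eN N (int b * t))"
      by simp
    then show ?thesis using dc_cnj_mult[OF dc True] by simp
  next
    case False
    define G where "G = gcd t (int N)"
    have G0: "G > 0" using N by (simp add: G_def)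
    have G1: "G \<noteq> 1" using False by (simp add: G_def coprime_iff_gcd_eq_1)
    define Gn where "Gn = nat G"
    have GnG: "int Gn = G" using G0 by (simp add: Gn_def)
    have "G dvd int N" by (simp add: G_def)
    then have GnN: "Gn dvd N" using GnG by (metis int_dvd_int_iff)
    define d where "d = N div Gn"
    have dG: "d * Gn = N" using GnN by (simp add: d_def)
    have Gn2: "Gn \<ge> 2" using G0 G1 by (simp add: Gn_def)
    have d0: "0 < d" using dG N by (cases d) auto
    have dN: "d dvd N" using dG by (metis dvd_triv_left)
    have "d * 1 < d * Gn" using d0 Gn2 by (intro mult_strict_left_mono) auto
    then have dlt: "d < N" using dG by simp
    obtain a where a: "coprime a (int N)" "a mod int d = 1 mod int d" "psi a \<noteq> 1"
      using pr d0 dN dlt unfolding primitive_dchar_def by blast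
    have Gt: "int Gn dvd t" using GnG by (simp add: G_def)
    have da: "int d dvd (a - 1)" using a(2) by (simp add: mod_eq_dvd_iff)
    have Ndiv: "int N dvd (a - 1) * t"
    proof -
      have "int N = int d * int Gn" using dG by (simp flip: of_nat_mult)
      then show ?thesis using mult_dvd_mono[OF da Gt] by simp
    qed
    let ?f = "\<lambda>b. nat ((int b * a) mod int N)"
    have bij: "bij_betw ?f {..<N} {..<N}" by (rule perm_mult[OF N a(1)])
    have f: "int (?f b) = (int b * a) mod int N" for b using N by simp
    let ?S = "\<Sum>b<N. psi (int b) * eN N (int b * t)"
    have "?S = (\<Sum>b<N. psi (int (?f b)) * eN N (int (?f b) * t))"
      by (rule sum.reindex_bij_betw[OF bij, symmetric])
    also have "\<dots> = (\<Sum>b<N. psi a * (psi (int b) * eN N (int b * t)))"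
    proof (intro sum.cong refl)
      fix b
      have e1: "eN N ((int b * a) mod int N * t) = eN N (int b * t)"
      proof (rule eN_cong[OF N])
        have "int N dvd int b * ((a - 1) * t)" using Ndiv by simp
        then have "(int b * a * t) mod int N = (int b * t) mod int N"
          by (simp add: mod_eq_dvd_iff algebra_simps)
        moreover have "((int b * a) mod int N * t) mod int N = (int b * a * t) mod int N" by (rule mod_mult_left_eq)
        ultimately show "((int b * a) mod int N * t) mod int N = (int b * t) mod int N" by simp
      qed
      show "psi (int (?f b)) * eN N (int (?f b) * t) = psi a * (psi (int b) * eN N (int b * t))"
        unfolding f e1 dc_mod[OF dc] dc_mult[OF dc] by (simp add: algebra_simps)
    qed
    also have "\<dots> = psi a * ?S" by (simp add: sum_distrib_left)
    finally have "(1 - psi a) * ?S = 0" by (simp add: algebra_simps)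
    then have "?S = 0" using a(3) by simp
    moreover have "psi t = 0" using False dc_zero_iff[OF dc] by simp
    ultimately show ?thesis by simp
  qed
qed

lemma cnj_eN: "cnj (eN N m) = eN N (- m)"
proof -
  have "cnj (2 * complex_of_real pi * \<i> * (of_int m / of_nat N)) = 2 * complex_of_real pi * \<i> * (of_int (- m) / of_nat N)"
    by simp
  then show ?thesis by (simp add: eN_def ee_def exp_cnj)
qed

lemma gauss_cnj:
  assumes pr: "primitive_dchar N psi"
  shows "gauss_sum N (\<lambda>n. cnj (psi n)) = psi (-1) * cnj (gauss_sum N psi)"
proof -
  have dc: "dchar N psi" using pr by (simp add: primitive_dchar_def)
  have "cnj (gauss_sum N psi) = (\<Sum>b<N. cnj (psi (int b)) * eN N (int b * (-1)))"
    by (simp add: gauss_eN cnj_eN)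
  also have "\<dots> = cnj (cnj (psi (-1))) * gauss_sum N (\<lambda>n. cnj (psi n))"
    by (rule gauss_key[OF primitive_cnj[OF pr]])
  finally have "psi (-1) * cnj (gauss_sum N psi) = (psi (-1) * psi (-1)) * gauss_sum N (\<lambda>n. cnj (psi n))"
    by simp
  then show ?thesis using dc_m1[OF dc] by simp
qed

lemma gauss_norm:
  assumes pr: "primitive_dchar N psi"
  shows "gauss_sum N psi * cnj (gauss_sum N psi) = of_nat N"
proof -
  have dc: "dchar N psi" using pr by (simp add: primitive_dchar_def)
  have N: "N > 0" using dc_N[OF dc] .
  define W where "W = gauss_sum N psi"
  define S where "S t = (\<Sum>b<N. psi (int b) * eN N (int b * t))" for t
  define K where "K = (\<Sum>t<N. psi (int t) * cnj (psi (int t)))"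
  have St: "S t = cnj (psi t) * W" for t unfolding S_def W_def by (rule gauss_key[OF pr])
  have lhs: "(\<Sum>t<N. S (int t) * cnj (S (int t))) = K * (W * cnj W)"
    unfolding K_def St sum_distrib_right by (intro sum.cong refl) (simp add: algebra_simps)
  have prod: "S (int t) * cnj (S (int t)) = (\<Sum>b<N. \<Sum>b'<N. psi (int b) * cnj (psi (int b')) * eN N ((int b - int b') * int t))" for t
  proof -
    have "S (int t) * cnj (S (int t)) = (\<Sum>b<N. psi (int b) * eN N (int b * int t)) * (\<Sum>b'<N. cnj (psi (int b')) * eN N (- (int b' * int t)))"
      by (simp add: S_def cnj_eN)
    also have "\<dots> = (\<Sum>b<N. \<Sum>b'<N. psi (int b) * eN N (int b * int t) * (cnj (psi (int b')) * eN N (- (int b' * int t))))"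
      by (rule sum_product)
    also have "\<dots> = (\<Sum>b<N. \<Sum>b'<N. psi (int b) * cnj (psi (int b')) * eN N ((int b - int b') * int t))"
    proof (intro sum.cong refl)
      fix b b'
      have "eN N ((int b - int b') * int t) = eN N (int b * int t) * eN N (- (int b' * int t))"
        by (simp add: eN_add[symmetric] algebra_simps)
      then show "psi (int b) * eN N (int b * int t) * (cnj (psi (int b')) * eN N (- (int b' * int t))) =
          psi (int b) * cnj (psi (int b')) * eN N ((int b - int b') * int t)" by simp
    qed
    finally show ?thesis .
  qed
  have "(\<Sum>t<N. S (int t) * cnj (S (int t))) =
      (\<Sum>b<N. \<Sum>b'<N. psi (int b) * cnj (psi (int b')) * (\<Sum>t<N. eN N ((int b - int b') * int t)))"
  proof -
    have "(\<Sum>t<N. S (int t) * cnj (S (int t))) = (\<Sum>t<N. \<Sum>b<N. \<Sum>b'<N. psi (int b) * cnj (psi (int b')) * eN N ((int b - int b') * int t))"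
      unfolding prod ..
    also have "\<dots> = (\<Sum>b<N. \<Sum>t<N. \<Sum>b'<N. psi (int b) * cnj (psi (int b')) * eN N ((int b - int b') * int t))"
      by (rule sum.swap)
    also have "\<dots> = (\<Sum>b<N. \<Sum>b'<N. \<Sum>t<N. psi (int b) * cnj (psi (int b')) * eN N ((int b - int b') * int t))"
      by (rule sum.cong[OF refl], rule sum.swap)
    also have "\<dots> = (\<Sum>b<N. \<Sum>b'<N. psi (int b) * cnj (psi (int b')) * (\<Sum>t<N. eN N ((int b - int b') * int t)))"
      by (simp only: sum_distrib_left)
    finally show ?thesis .
  qed
  also have "\<dots> = (\<Sum>b<N. \<Sum>b'<N. psi (int b) * cnj (psi (int b')) * (if b = b' then of_nat N else 0))"
  proof (intro sum.cong refl)
    fix b b' assume b: "b \<in> {..<N}" and b': "b' \<in> {..<N}"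
    have "int N dvd (int b - int b') \<longleftrightarrow> b = b'"
    proof
      assume "int N dvd (int b - int b')"
      then have "[int b = int b'] (mod int N)" by (simp add: cong_iff_dvd_diff)
      then show "b = b'" using b b' by (metis cong_int_iff cong_less_modulus_unique_nat lessThan_iff)
    qed simp
    then show "psi (int b) * cnj (psi (int b')) * (\<Sum>t<N. eN N ((int b - int b') * int t)) =
        psi (int b) * cnj (psi (int b')) * (if b = b' then of_nat N else 0)"
      by (simp add: eN_orth[OF N])
  qed
  also have "\<dots> = (\<Sum>b<N. \<Sum>b'<N. (if b = b' then psi (int b) * cnj (psi (int b)) * of_nat N else 0))"
    by (intro sum.cong refl) auto
  also have "\<dots> = (\<Sum>b<N. psi (int b) * cnj (psi (int b)) * of_nat N)"
    by (simp add: sum.delta sum.delta')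
  also have "\<dots> = of_nat N * K" by (simp add: K_def sum_distrib_left algebra_simps)
  finally have eq: "K * (W * cnj W) = of_nat N * K" using lhs by simp
  have K0: "K \<noteq> 0"
  proof -
    have e: "\<And>t. psi (int t) * cnj (psi (int t)) = of_real ((norm (psi (int t)))^2)"
      by (rule complex_norm_square[symmetric])
    have Ks: "K = of_real (\<Sum>t<N. (norm (psi (int t)))^2)" unfolding K_def e of_real_sum ..
    have ge: "(\<Sum>t<N. (norm (psi (int t)))^2) \<ge> (norm (psi (int (nat (1 mod int N)))))^2"
    proof -
      have "nat (1 mod int N) \<in> {..<N}" using N by (simp add: nat_less_iff)
      then show ?thesis by (intro member_le_sum) auto
    qed
    have one: "psi (int (nat (1 mod int N))) = 1"
      using N dc_mod[OF dc, of 1] dc_1[OF dc] by simp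
    have "(\<Sum>t<N. (norm (psi (int t)))^2) \<ge> 1" using ge unfolding one by simp
    then have "(\<Sum>t<N. (norm (psi (int t)))^2) \<noteq> 0" by linarith
    then show ?thesis unfolding Ks by (simp only: of_real_eq_0_iff not_False_eq_True)
  qed
  show ?thesis using eq K0 unfolding W_def by simp
qed


definition ccinv :: "nat \<Rightarrow> nat \<Rightarrow> int" where
  "ccinv N b = - (SOME u. [int b * u = 1] (mod int N))"

lemma ccinv_cong: assumes "coprime (int b) (int N)" shows "[int b * ccinv N b = -1] (mod int N)"
proof -
  have "\<exists>u. [int b * u = 1] (mod int N)"
    using cong_solve_int[of "int b" "int N"] assms by (simp add: coprime_iff_gcd_eq_1)
  then have "[int b * (SOME u. [int b * u = 1] (mod int N)) = 1] (mod int N)" by (rule someI_ex)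
  then have "[- (int b * (SOME u. [int b * u = 1] (mod int N))) = - 1] (mod int N)" by (rule cong_minus_minus_iff[THEN iffD2])
  then show ?thesis by (simp add: ccinv_def)
qed

lemma inner_sum:
  assumes pr: "primitive_dchar N chi"
    and cc: "\<And>b. b < N \<Longrightarrow> coprime (int b) (int N) \<Longrightarrow> [int b * cc b = -1] (mod int N)"
  shows "(\<Sum>b<N. cnj (chi (int b)) * eN N (cc b * t)) = chi (-1) * gauss_sum N chi * cnj (chi t)"
proof -
  have dc: "dchar N chi" using pr by (simp add: primitive_dchar_def)
  have N: "N > 0" using dc_N[OF dc] .
  define U where "U = {b. b < N \<and> coprime (int b) (int N)}"
  have finU: "finite U" by (simp add: U_def)
  have UN: "U \<subseteq> {..<N}" by (auto simp: U_def)
  have zero: "\<And>b. b \<notin> U \<Longrightarrow> b < N \<Longrightarrow> chi (int b) = 0" using dc_zero_iff[OF dc] by (auto simp: U_def)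
  define h where "h m = chi (int m) * eN N (int m * t)" for m
  define sg where "sg b = nat (cc b mod int N)" for b
  have sgi: "int (sg b) = cc b mod int N" for b using N by (simp add: sg_def)
  have cop: "coprime (cc b) (int N)" if "b \<in> U" for b
  proof -
    have "[int b * cc b = -1] (mod int N)" using cc that by (auto simp: U_def)
    moreover have "coprime (-1 :: int) (int N)" by simp
    ultimately have "coprime (int b * cc b) (int N)" by (rule cong_imp_coprime[OF cong_sym])
    then show ?thesis by simp
  qed
  have maps: "sg ` U \<subseteq> U"
  proof
    fix m assume "m \<in> sg ` U"
    then obtain b where b: "b \<in> U" "m = sg b" by auto
    have "m < N" using N b by (simp add: sg_def nat_less_iff)
    moreover have "coprime (int m) (int N)" using b sgi cop N by simp
    ultimately show "m \<in> U" by (simp add: U_def)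
  qed
  have inj: "inj_on sg U"
  proof (rule inj_onI)
    fix b b' assume b: "b \<in> U" and b': "b' \<in> U" and e: "sg b = sg b'"
    have "cc b mod int N = cc b' mod int N" using e sgi by metis
    then have d1: "int N dvd cc b - cc b'" by (simp add: mod_eq_dvd_iff)
    have d2: "int N dvd int b * cc b + 1" using cc b by (auto simp: U_def cong_iff_dvd_diff)
    have d3: "int N dvd int b' * cc b' + 1" using cc b' by (auto simp: U_def cong_iff_dvd_diff)
    have "int b - int b' = int b * (int b' * cc b' + 1) - int b' * (int b * cc b + 1) + int b * int b' * (cc b - cc b')"
      by (simp add: algebra_simps)
    moreover have "int N dvd int b * (int b' * cc b' + 1) - int b' * (int b * cc b + 1) + int b * int b' * (cc b - cc b')"
    proof -
      have "int N dvd int b * (int b' * cc b' + 1)" using d3 by (rule dvd_mult)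
      moreover have "int N dvd int b' * (int b * cc b + 1)" using d2 by (rule dvd_mult)
      moreover have "int N dvd int b * int b' * (cc b - cc b')" using d1 by (rule dvd_mult)
      ultimately show ?thesis by (intro dvd_add dvd_diff)
    qed
    ultimately have "int N dvd int b - int b'" by simp
    then have "[int b = int b'] (mod int N)" by (simp add: cong_iff_dvd_diff)
    then have "int b = int b'" using b b' by (intro cong_less_imp_eq_int) (auto simp: U_def)
    then show "b = b'" by simp
  qed
  have bij: "bij_betw sg U U" using endo_inj_surj[OF finU maps inj] inj by (simp add: bij_betw_def)
  have tm: "cnj (chi (int b)) * eN N (cc b * t) = chi (-1) * h (sg b)" if b: "b \<in> U" for b
  proof -
    have cb: "coprime (int b) (int N)" using b by (simp add: U_def)
    have "(int b * cc b) mod int N = (-1) mod int N" using cc b by (auto simp: U_def cong_def)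
    then have "chi (int b * cc b) = chi (-1)" by (rule dc_cong[OF dc])
    then have "chi (int b) * chi (cc b) = chi (-1)" by (simp add: dc_mult[OF dc])
    then have "cnj (chi (int b)) * chi (int b) * chi (cc b) = cnj (chi (int b)) * chi (-1)" by (simp add: mult.assoc)
    then have c1: "chi (cc b) = cnj (chi (int b)) * chi (-1)" using dc_cnj_mult[OF dc cb] by simp
    have c2: "chi (-1) * chi (cc b) = cnj (chi (int b))"
      using c1 dc_m1[OF dc] by (metis mult.commute mult.left_commute mult_1)
    have e1: "eN N ((cc b mod int N) * t) = eN N (cc b * t)"
      by (rule eN_cong[OF N]) (simp add: mod_mult_left_eq)
    show ?thesis unfolding h_def sgi e1 dc_mod[OF dc] using c2 by simp
  qed
  have "(\<Sum>b<N. cnj (chi (int b)) * eN N (cc b * t)) = (\<Sum>b\<in>U. cnj (chi (int b)) * eN N (cc b * t))"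
    by (rule sum.mono_neutral_right) (use UN zero in auto)
  also have "\<dots> = (\<Sum>b\<in>U. chi (-1) * h (sg b))" by (intro sum.cong refl tm) 
  also have "\<dots> = chi (-1) * (\<Sum>b\<in>U. h (sg b))" by (simp add: sum_distrib_left)
  also have "(\<Sum>b\<in>U. h (sg b)) = (\<Sum>m\<in>U. h m)" by (rule sum.reindex_bij_betw[OF bij])
  also have "\<dots> = (\<Sum>m<N. h m)"
    by (rule sum.mono_neutral_left) (use UN zero in \<open>auto simp: h_def\<close>)
  also have "\<dots> = cnj (chi t) * gauss_sum N chi" unfolding h_def by (rule gauss_key[OF pr])
  finally show ?thesis by (simp add: algebra_simps)
qed


lemma jinner_shiftE: fixes X :: "'a::field_char_0 jor"
  shows "jinner X (jor_add (jor_smul u jone) V) = u * jtr X + jinner X V"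
  by (cases X rule: jor_exh; cases V rule: jor_exh; hypsubst_thin; simp only: UNF mult_1_right mult_zero_right add_0_left add_0_right; (intro conjI)?; (rule TrueI | rule refl | algebra | simp add: algebra_simps))

lemma ex_shift: "ee (jinner (jC T) (jor_add (jC (jor_smul s jone)) V)) = ee (complex_of_real (s * jtr T)) * ee (jinner (jC T) V)"
  by (simp add: jC_smul jC_one jinner_shiftE jtr_jC ee_add)

lemma infsum_finsum:
  fixes f :: "'i \<Rightarrow> 'a \<Rightarrow> complex"
  assumes "finite I" "\<And>i. i \<in> I \<Longrightarrow> f i summable_on A"
  shows "(\<lambda>x. \<Sum>i\<in>I. f i x) summable_on A \<and> infsum (\<lambda>x. \<Sum>i\<in>I. f i x) A = (\<Sum>i\<in>I. infsum (f i) A)"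
  using assms
proof (induction I rule: finite_induct)
  case empty then show ?case by simp
next
  case (insert i I)
  have s1: "f i summable_on A" using insert by simp
  have s2: "(\<lambda>x. \<Sum>i\<in>I. f i x) summable_on A" using insert by simp
  have e2: "infsum (\<lambda>x. \<Sum>i\<in>I. f i x) A = (\<Sum>i\<in>I. infsum (f i) A)" using insert by simp
  show ?case using insert(1,2) s1 s2 e2 by (simp add: summable_on_add infsum_add)
qed

lemma autom:
  fixes Y :: "real jor" and b c :: int and N :: nat
  assumes cusp: "is_cusp_form k F a" and Y: "Y \<in> R3plus" and N: "N > 0"
    and cong: "[b * c = -1] (mod int N)"
  shows "F (jor_add (jC (jor_smul (of_int b / real N) jone)) (jor_smul \<i> (jC (jinv (jor_smul (real N ^ 2) Y))))) =
     (\<i> * of_nat N ^ 3 * complex_of_real (jdet Y)) ^ k * F (jor_add (jC (jor_smul (of_int c / real N) jone)) (jor_smul \<i> (jC Y)))"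
proof -
  obtain m where m: "b * c + 1 = int N * m" using cong by (auto simp: cong_iff_dvd_diff elim: dvdE)
  define q where "q = - m"
  have det: "b * (- c) - q * int N = 1" using m by (simp add: q_def algebra_simps)
  have r0: "int N \<noteq> 0" using N by simp
  let ?g = "gmapG (of_int b) (of_int q) (of_int (int N)) (of_int (- c)) (1 / of_int (int N)) :: real fts \<Rightarrow> real fts"
  have gZ: "?g \<in> GZ" by (rule gmap_GZ[OF r0 det])
  define U where "U = jor_add (jC (jor_smul (of_int c / real N) jone)) (jor_smul \<i> (jC Y))"
  define W where "W = jor_add (jC (jor_smul (of_int b / real N) jone)) (jor_smul \<i> (jC (jinv (jor_smul (real N ^ 2) Y))))"
  have dY: "jdet Y \<noteq> 0" by (rule R3plus_det[OF Y])
  have Ui: "U \<in> tube" unfolding U_def by (rule tube_I[OF Y])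
  have Wi: "W \<in> tube" unfolding W_def by (rule tube_I, rule R3plus_inv[OF Y]) (use N in simp)
  have "cext ?g (femb U) = gmapG (of_int b :: complex) (of_int q) (of_nat N) (of_int (- c)) (1 / of_nat N) (femb U)"
    unfolding cext_gmap by simp
  also have "\<dots> = fts_smul (\<i> * of_nat N ^ 3 * complex_of_real (jdet Y)) (femb W)"
    unfolding U_def W_def by (rule chain[OF N dY])
  finally have "cext ?g (femb U) = fts_smul (\<i> * of_nat N ^ 3 * complex_of_real (jdet Y)) (femb W)" .
  then show ?thesis using cusp gZ Ui Wi unfolding is_cusp_form_def U_def[symmetric] W_def[symmetric] by blast
qed


lemma JZpos_tr: assumes "T \<in> JZpos" shows "of_int \<lfloor>jtr T\<rfloor> = jtr T"
proof -
  have "jtr T \<in> \<int>" using assms jtr_JZ by (auto simp: JZpos_def)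
  then show ?thesis by (metis Ints_cases floor_of_int)
qed

theorem theorem2p1:
  fixes F :: "complex jor \<Rightarrow> complex" and a :: "real jor \<Rightarrow> complex"
    and k N :: nat and chi :: "int \<Rightarrow> complex"
  assumes "is_cusp_form k F a" and "even k" and "primitive_dchar N chi"
  shows "\<forall>Y\<in>R3plus.
    twist chi a (jor_smul \<i> (jC (jinv (jor_smul (real N ^ 2) Y)))) =
      (-1) ^ (3 * k div 2) * gauss_sum N chi ^ 2 * of_nat N powi (3 * int k - 1)
      * complex_of_real (jdet Y) ^ k * twist (\<lambda>n. cnj (chi n)) a (jor_smul \<i> (jC Y))"
proof (intro ballI)
  fix Y assume Y: "Y \<in> R3plus"
  note cusp = assms(1) and ev = assms(2) and pr = assms(3)
  have dc: "dchar N chi" using pr by (simp add: primitive_dchar_def)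
  have N: "N > 0" using dc_N[OF dc] .
  have prc: "primitive_dchar N (\<lambda>n. cnj (chi n))" by (rule primitive_cnj[OF pr])
  define Yi where "Yi = jinv (jor_smul (real N ^ 2) Y)"
  have Yi: "Yi \<in> R3plus" unfolding Yi_def by (rule R3plus_inv[OF Y]) (use N in simp)
  define ex where "ex T Z = ee (jinner (jC T) Z)" for T Z
  define Wp where "Wp b = jor_add (jC (jor_smul (of_int (int b) / real N) jone)) (jor_smul \<i> (jC Yi))" for b :: nat
  define Up where "Up c = jor_add (jC (jor_smul (of_int c / real N) jone)) (jor_smul \<i> (jC Y))" for c :: int
  define Z' where "Z' = jor_smul \<i> (jC Yi)"
  define Z0 where "Z0 = jor_smul \<i> (jC Y)"
  define tr where "tr T = \<lfloor>jtr T\<rfloor>" for T :: "real jor"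
  define W where "W = gauss_sum N chi"
  define Wc where "Wc = gauss_sum N (\<lambda>n. cnj (chi n))"
  define jj where "jj = \<i> * of_nat N ^ 3 * complex_of_real (jdet Y)"
  define cc where "cc = ccinv N"
  define cb where "cb b = cnj (chi (int b))" for b :: nat
  have Fexp: "(\<lambda>T. a T * ex T Z) summable_on JZpos \<and> F Z = infsum (\<lambda>T. a T * ex T Z) JZpos" if "Z \<in> tube" for Z
    using cusp that unfolding is_cusp_form_def ex_def by blast
  have trT: "of_int (tr T) = jtr T" if "T \<in> JZpos" for T using JZpos_tr[OF that] by (simp add: tr_def)
  have exW: "ex T (Wp b) = eN N (int b * tr T) * ex T Z'" if T: "T \<in> JZpos" for T b
  proof -
    have ctr: "complex_of_real (jtr T) = of_int (tr T)" using trT[OF T] by (metis of_real_of_int_eq)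
    show ?thesis unfolding ex_def Wp_def Z'_def ex_shift by (simp add: eN_def ctr)
  qed
  have exU: "ex T (Up c) = eN N (c * tr T) * ex T Z0" if T: "T \<in> JZpos" for T c
  proof -
    have ctr: "complex_of_real (jtr T) = of_int (tr T)" using trT[OF T] by (metis of_real_of_int_eq)
    show ?thesis unfolding ex_def Up_def Z0_def ex_shift by (simp add: eN_def ctr)
  qed
  have WpT: "Wp b \<in> tube" for b unfolding Wp_def by (rule tube_I[OF Yi])
  have UpT: "Up c \<in> tube" for c unfolding Up_def by (rule tube_I[OF Y])
  have Wc0: "Wc \<noteq> 0" using gauss_norm[OF prc] N unfolding Wc_def by auto
  have stepA: "chi t = (1/Wc) * (\<Sum>b<N. cb b * eN N (int b * t))" for t
  proof -
    have "(\<Sum>b<N. cb b * eN N (int b * t)) = cnj (cnj (chi t)) * Wc"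
      unfolding cb_def Wc_def by (rule gauss_key[OF prc])
    then show ?thesis using Wc0 by simp
  qed
  have "twist chi a Z' = infsum (\<lambda>T. chi (tr T) * a T * ex T Z') JZpos"
    by (simp add: twist_def tr_def ex_def)
  also have "\<dots> = infsum (\<lambda>T. (1/Wc) * (\<Sum>b<N. cb b * (a T * ex T (Wp b)))) JZpos"
  proof (rule infsum_cong)
    fix T assume T: "T \<in> JZpos"
    show "chi (tr T) * a T * ex T Z' = (1/Wc) * (\<Sum>b<N. cb b * (a T * ex T (Wp b)))"
      unfolding stepA[of "tr T"] exW[OF T] by (simp add: sum_distrib_left sum_distrib_right algebra_simps)
  qed
  also have "\<dots> = (1/Wc) * (\<Sum>b<N. infsum (\<lambda>T. cb b * (a T * ex T (Wp b))) JZpos)"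
  proof -
    have "(\<lambda>T. cb b * (a T * ex T (Wp b))) summable_on JZpos" for b
      using Fexp[OF WpT[of b]] by (intro summable_on_cmult_right) auto
    then have "infsum (\<lambda>T. \<Sum>b<N. cb b * (a T * ex T (Wp b))) JZpos = (\<Sum>b<N. infsum (\<lambda>T. cb b * (a T * ex T (Wp b))) JZpos)"
      using infsum_finsum[of "{..<N}" "\<lambda>b T. cb b * (a T * ex T (Wp b))" JZpos] by simp
    then show ?thesis by (simp only: infsum_cmult_right')
  qed
  also have "\<dots> = (1/Wc) * (\<Sum>b<N. cb b * F (Wp b))"
    using Fexp[OF WpT] by (simp add: infsum_cmult_right')
  also have "\<dots> = (1/Wc) * (\<Sum>b<N. jj ^ k * (cb b * F (Up (cc b))))"
  proof -
    have "cb b * F (Wp b) = jj ^ k * (cb b * F (Up (cc b)))" if b: "b < N" for b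
    proof (cases "coprime (int b) (int N)")
      case True
      have cg: "[int b * cc b = -1] (mod int N)" unfolding cc_def by (rule ccinv_cong[OF True])
      have "F (Wp b) = jj ^ k * F (Up (cc b))"
        unfolding Wp_def Up_def jj_def Yi_def by (rule autom[OF cusp Y N cg])
      then show ?thesis by simp
    next
      case False
      then have "cb b = 0" using dc_zero_iff[OF dc] by (simp add: cb_def)
      then show ?thesis by simp
    qed
    then have "(\<Sum>b<N. cb b * F (Wp b)) = (\<Sum>b<N. jj ^ k * (cb b * F (Up (cc b))))"
      by (intro sum.cong) auto
    then show ?thesis by simp
  qed
  also have "\<dots> = (1/Wc) * jj ^ k * (\<Sum>b<N. cb b * F (Up (cc b)))"
    by (simp add: sum_distrib_left)
  also have "(\<Sum>b<N. cb b * F (Up (cc b))) = (\<Sum>b<N. infsum (\<lambda>T. cb b * eN N (cc b * tr T) * (a T * ex T Z0)) JZpos)"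
  proof (rule sum.cong[OF refl])
    fix b
    have "F (Up (cc b)) = infsum (\<lambda>T. a T * ex T (Up (cc b))) JZpos" using Fexp[OF UpT] by simp
    also have "\<dots> = infsum (\<lambda>T. eN N (cc b * tr T) * (a T * ex T Z0)) JZpos"
      by (rule infsum_cong) (simp add: exU)
    finally show "cb b * F (Up (cc b)) = infsum (\<lambda>T. cb b * eN N (cc b * tr T) * (a T * ex T Z0)) JZpos"
      by (simp add: infsum_cmult_right' mult.assoc)
  qed
  also have "\<dots> = infsum (\<lambda>T. \<Sum>b<N. cb b * eN N (cc b * tr T) * (a T * ex T Z0)) JZpos"
  proof -
    have "(\<lambda>T. cb b * eN N (cc b * tr T) * (a T * ex T Z0)) summable_on JZpos" for b
    proof -
      have "(\<lambda>T. cb b * (a T * ex T (Up (cc b)))) summable_on JZpos"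
        using Fexp[OF UpT[of "cc b"]] by (intro summable_on_cmult_right) auto
      then show ?thesis by (rule summable_on_cong[THEN iffD1, rotated]) (simp add: exU)
    qed
    then show ?thesis
      using infsum_finsum[of "{..<N}" "\<lambda>b T. cb b * eN N (cc b * tr T) * (a T * ex T Z0)" JZpos] by simp
  qed
  also have "\<dots> = infsum (\<lambda>T. (chi (-1) * W) * (cnj (chi (tr T)) * a T * ex T Z0)) JZpos"
  proof (rule infsum_cong)
    fix T
    have ie: "(\<Sum>b<N. cb b * eN N (cc b * tr T)) = chi (-1) * W * cnj (chi (tr T))"
      unfolding cb_def W_def by (rule inner_sum[OF pr]) (simp add: cc_def ccinv_cong)
    have "(\<Sum>b<N. cb b * eN N (cc b * tr T) * (a T * ex T Z0)) = (\<Sum>b<N. cb b * eN N (cc b * tr T)) * (a T * ex T Z0)"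
      by (rule sum_distrib_right[symmetric])
    then show "(\<Sum>b<N. cb b * eN N (cc b * tr T) * (a T * ex T Z0)) = (chi (-1) * W) * (cnj (chi (tr T)) * a T * ex T Z0)"
      unfolding ie by (simp add: algebra_simps)
  qed
  also have "\<dots> = chi (-1) * W * twist (\<lambda>n. cnj (chi n)) a Z0"
    by (simp add: infsum_cmult_right' twist_def tr_def ex_def)
  finally have main: "twist chi a Z' = (1/Wc) * jj ^ k * (chi (-1) * W * twist (\<lambda>n. cnj (chi n)) a Z0)" .
  have m1: "chi (-1) * chi (-1) = 1" by (rule dc_m1[OF dc])
  have WW: "W * cnj W = of_nat N" unfolding W_def by (rule gauss_norm[OF pr])
  have Wc: "Wc = chi (-1) * cnj W" unfolding Wc_def W_def by (rule gauss_cnj[OF pr])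
  have c1: "(1/Wc) * chi (-1) * W = W^2 / of_nat N"
  proof -
    have W0: "W \<noteq> 0" using WW N by auto
    have c0: "chi (-1) \<noteq> 0" using m1 by auto
    have "(1/Wc) * chi (-1) * W = W / cnj W" using c0 W0 unfolding Wc by (simp add: field_simps)
    also have "\<dots> = W^2 / of_nat N" using W0 WW N by (simp add: field_simps power2_eq_square)
    finally show ?thesis .
  qed
  obtain m where km: "k = 2 * m" using ev by (auto elim: evenE)
  have i2: "\<i> ^ k = (-1) ^ (3 * k div 2)"
  proof -
    have "\<i> ^ k = (-1 :: complex) ^ m" by (simp add: km power_mult)
    also have "\<dots> = (-1) ^ (3 * m)" by (simp add: power_mult)
    also have "3 * m = 3 * k div 2" by (simp add: km)
    finally show ?thesis .
  qed
  have pw: "of_nat N powi (3 * int k - 1) = (of_nat N :: complex) ^ (3 * k) / of_nat N"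
  proof -
    have e: "3 * int k - 1 = int (3 * k) - int 1" by simp
    have n0: "(of_nat N :: complex) \<noteq> 0" using N by simp
    show ?thesis unfolding e power_int_diff[OF disjI1[OF n0]] power_int_of_nat by simp
  qed
  have jjk: "jj ^ k = (-1) ^ (3 * k div 2) * of_nat N ^ (3 * k) * complex_of_real (jdet Y) ^ k"
    by (simp add: jj_def power_mult_distrib i2 power_mult[symmetric] mult.commute)
  show "twist chi a (jor_smul \<i> (jC (jinv (jor_smul (real N ^ 2) Y)))) =
      (-1) ^ (3 * k div 2) * gauss_sum N chi ^ 2 * of_nat N powi (3 * int k - 1)
      * complex_of_real (jdet Y) ^ k * twist (\<lambda>n. cnj (chi n)) a (jor_smul \<i> (jC Y))"
  proof -
    have "twist chi a (jor_smul \<i> (jC (jinv (jor_smul (real N ^ 2) Y)))) = twist chi a Z'" by (simp add: Z'_def Yi_def)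
    also have "\<dots> = ((1/Wc) * chi (-1) * W) * jj ^ k * twist (\<lambda>n. cnj (chi n)) a Z0"
      unfolding main by (simp add: algebra_simps)
    also have "\<dots> = W^2 / of_nat N * ((-1) ^ (3 * k div 2) * of_nat N ^ (3 * k) * complex_of_real (jdet Y) ^ k) * twist (\<lambda>n. cnj (chi n)) a Z0"
      unfolding c1 jjk ..
    also have "\<dots> = (-1) ^ (3 * k div 2) * W ^ 2 * (of_nat N ^ (3 * k) / of_nat N) * complex_of_real (jdet Y) ^ k * twist (\<lambda>n. cnj (chi n)) a Z0"
      by (simp add: algebra_simps)
    finally show ?thesis unfolding pw W_def Z0_def .
  qed
qed


end
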